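(* Let $\Phi=(A;A^*;\{E_i\}_{i=0}^d;\{E^*_i\}_{i=0}^d)$ be a Leonard system in $\mathcal A$ with eigenvalue sequence $\theta_0,\dots,\theta_d$, dual eigenvalue sequence $\theta^*_0,\dots,\theta^*_d$, first split sequence $\varphi_1,\dots,\varphi_d$ and second split sequence $\phi_1,\dots,\phi_d$, and let $k_i=\nu\,\mathrm{tr}(E^*_iE_0)$. Then $$k_i=\frac{\varphi_1\varphi_2\cdots\varphi_i}{\phi_1\phi_2\cdots\phi_i}\cdot\frac{\eta^*_d(\theta^*_0)}{\tau^*_i(\theta^*_i)\,\eta^*_{d-i}(\theta^*_i)}\qquad(0\le i\le d).$$
   Context: Let $\mathbb K$ be a field, $d\ge 0$ an integer, and $\mathcal A$ a $\mathbb K$-algebra isomorphic to the full matrix algebra $\mathrm{Mat}_{d+1}(\mathbb K)$; $I$ is its identity. An element of $\mathcal A$ is multiplicity-free if it has $d+1$ mutually distinct eigenvalues in $\mathbb K$. If $A$ is multiplicity-free with eigenvalues $\theta_0,\dots,\theta_d$, the primitive idempotent of $A$ associated with $\theta_i$ is $E_i=\prod_{j\ne i}(A-\theta_jI)/(\theta_i-\theta_j)$. A Leonard system in $\mathcal A$ is a sequence $\Phi=(A;A^*;\{E_i\}_{i=0}^d;\{E^*_i\}_{i=0}^d)$ such that (i) $A,A^*\in\mathcal A$ are multiplicity-free; (ii) $E_0,\dots,E_d$ is an ordering of the primitive idempotents of $A$; (iii) $E^*_0,\dots,E^*_d$ is an ordering of the primitive idempotents of $A^*$; (iv) $E_iA^*E_j=0$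 if $|i-j|>1$ and $E_iA^*E_j\ne0$ if $|i-j|=1$ ($0\le i,j\le d$); (v) $E^*_iAE^*_j=0$ if $|i-j|>1$ and $E^*_iAE^*_j\ne0$ if $|i-j|=1$ ($0\le i,j\le d$). Here $A^*$ is merely notation (not an adjoint). $\theta_i$ (resp. $\theta^*_i$) is the eigenvalue of $A$ (resp. $A^*$) associated with $E_i$ (resp. $E^*_i$). The scalar $\mathrm{tr}(E_0E^*_0)$ is nonzero and $\nu$ is its inverse. First split sequence of a Leonard system $\Psi=(B;B^*;\{F_i\};\{F^*_i\})$ with eigenvalues $\sigma_i$ (for $F_i$) and dual eigenvalues $\sigma^*_i$ (for $F^*_i$): on an irreducible module $V$, $U_i=(F^*_0V+\cdots+F^*_iV)\cap(F_iV+\cdots+F_dV)$ is $1$-dimensional and, for $1\le i\le d$, an eigenspace of $(B-\sigma_{i-1}I)(B^*-\sigma^*_iI)$ with nonzero eigenvalue, denoted $\varphi_i(\Psi)$. The first split sequence of $\Phi$ is $\varphi_i=\varphi_i(\Phi)$; the second split sequence is $\phi_i=\varphi_i(\Phi^{\Downarrow})$, where $\Phi^{\Downarrow}=(A;A^*;\{E_{d-i}\}_{i=0}^d;\{E^*_i\}_{i=0}^d)$ (also a Leonard system). Polynomials: $\tau^*_i=\prod_{h=0}^{i-1}(\lambda-\theta^*_h)$, $\eta^*_i=\prod_{h=0}^{i-1}(\lambda-\theta^*_{d-h})$ (empty products $=1$). *)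

theory Defs
  imports "Jordan_Normal_Form.Char_Poly"
begin

text \<open>We realise the algebra isomorphic to Mat_{d+1}(K) as the full matrix algebra
  of (d+1) x (d+1) matrices over the field K, acting on its irreducible module K^(d+1).\<close>

definition mtrace :: "'a::comm_ring_1 mat \<Rightarrow> 'a" where
  "mtrace M = (\<Sum>i<dim_row M. M $$ (i, i))"

definition multiplicity_free :: "nat \<Rightarrow> 'a::field mat \<Rightarrow> bool" where
  "multiplicity_free d A \<longleftrightarrow> A \<in> carrier_mat (Suc d) (Suc d) \<and>
     finite {k. eigenvalue A k} \<and> card {k. eigenvalue A k} = Suc d"

definition prim_idem :: "nat \<Rightarrow> 'a::field mat \<Rightarrow> (nat \<Rightarrow> 'a) \<Rightarrow> nat \<Rightarrow> 'a mat" where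
  "prim_idem d A th i =
     foldr (\<lambda>j M. ((1 / (th i - th j)) \<cdot>\<^sub>m (A - th j \<cdot>\<^sub>m 1\<^sub>m (Suc d))) * M)
       (filter (\<lambda>j. j \<noteq> i) [0..<Suc d]) (1\<^sub>m (Suc d))"

definition eigen_ordering :: "nat \<Rightarrow> 'a::field mat \<Rightarrow> (nat \<Rightarrow> 'a) \<Rightarrow> bool" where
  "eigen_ordering d A th \<longleftrightarrow> inj_on th {..d} \<and> th ` {..d} = {k. eigenvalue A k}"

text \<open>Leonard system (A; As; {E_i}; {Es_i}) where E_i (resp. Es_i) is the primitive
  idempotent of A (resp. As) for the eigenvalue th_i (resp. ths_i).\<close>
definition leonard_system ::
  "nat \<Rightarrow> 'a::field mat \<Rightarrow> 'a mat \<Rightarrow> (nat \<Rightarrow> 'a) \<Rightarrow> (nat \<Rightarrow> 'a) \<Rightarrow> bool" where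
  "leonard_system d A As th ths \<longleftrightarrow>
     multiplicity_free d A \<and> multiplicity_free d As \<and>
     eigen_ordering d A th \<and> eigen_ordering d As ths \<and>
     (\<forall>i\<le>d. \<forall>j\<le>d.
        (Suc i < j \<or> Suc j < i \<longrightarrow>
           prim_idem d A th i * As * prim_idem d A th j = 0\<^sub>m (Suc d) (Suc d)) \<and>
        (Suc i = j \<or> Suc j = i \<longrightarrow>
           prim_idem d A th i * As * prim_idem d A th j \<noteq> 0\<^sub>m (Suc d) (Suc d)) \<and>
        (Suc i < j \<or> Suc j < i \<longrightarrow>
           prim_idem d As ths i * A * prim_idem d As ths j = 0\<^sub>m (Suc d) (Suc d)) \<and>
        (Suc i = j \<or> Suc j = i \<longrightarrow>
           prim_idem d As ths i * A * prim_idem d As ths j \<noteq> 0\<^sub>m (Suc d) (Suc d)))"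

definition subspace_sum :: "nat \<Rightarrow> (nat \<Rightarrow> 'a::field mat) \<Rightarrow> nat set \<Rightarrow> 'a vec set" where
  "subspace_sum d F H = {v. \<exists>w. (\<forall>h\<in>H. w h \<in> carrier_vec (Suc d)) \<and>
       v = finsum_vec TYPE('a) (Suc d) (\<lambda>h. F h *\<^sub>v w h) H}"

definition split_U :: "nat \<Rightarrow> 'a::field mat \<Rightarrow> 'a mat \<Rightarrow> (nat \<Rightarrow> 'a) \<Rightarrow> (nat \<Rightarrow> 'a) \<Rightarrow> nat \<Rightarrow> 'a vec set" where
  "split_U d B Bs sg sgs i =
     subspace_sum d (prim_idem d Bs sgs) {0..i} \<inter> subspace_sum d (prim_idem d B sg) {i..d}"

definition split_val :: "nat \<Rightarrow> 'a::field mat \<Rightarrow> 'a mat \<Rightarrow> (nat \<Rightarrow> 'a) \<Rightarrow> (nat \<Rightarrow> 'a) \<Rightarrow> nat \<Rightarrow> 'a" where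
  "split_val d B Bs sg sgs i =
     (THE c. \<forall>u\<in>split_U d B Bs sg sgs i.
        ((B - sg (i - 1) \<cdot>\<^sub>m 1\<^sub>m (Suc d)) * (Bs - sgs i \<cdot>\<^sub>m 1\<^sub>m (Suc d))) *\<^sub>v u = c \<cdot>\<^sub>v u)"

definition first_split :: "nat \<Rightarrow> 'a::field mat \<Rightarrow> 'a mat \<Rightarrow> (nat \<Rightarrow> 'a) \<Rightarrow> (nat \<Rightarrow> 'a) \<Rightarrow> nat \<Rightarrow> 'a" where
  "first_split d A As th ths i = split_val d A As th ths i"

text \<open>Second split sequence: first split sequence of Phi-Down, whose eigenvalue
  sequence is th_{d-i} (idempotents E_{d-i}).\<close>
definition second_split :: "nat \<Rightarrow> 'a::field mat \<Rightarrow> 'a mat \<Rightarrow> (nat \<Rightarrow> 'a) \<Rightarrow> (nat \<Rightarrow> 'a) \<Rightarrow> nat \<Rightarrow> 'a" where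
  "second_split d A As th ths i = split_val d A As (\<lambda>j. th (d - j)) ths i"

definition tau_star :: "(nat \<Rightarrow> 'a::field) \<Rightarrow> nat \<Rightarrow> 'a \<Rightarrow> 'a" where
  "tau_star ths i x = (\<Prod>h<i. x - ths h)"

definition eta_star :: "nat \<Rightarrow> (nat \<Rightarrow> 'a::field) \<Rightarrow> nat \<Rightarrow> 'a \<Rightarrow> 'a" where
  "eta_star d ths i x = (\<Prod>h<i. x - ths (d - h))"

definition nu_LS :: "nat \<Rightarrow> 'a::field mat \<Rightarrow> 'a mat \<Rightarrow> (nat \<Rightarrow> 'a) \<Rightarrow> (nat \<Rightarrow> 'a) \<Rightarrow> 'a" where
  "nu_LS d A As th ths = 1 / mtrace (prim_idem d A th 0 * prim_idem d As ths 0)"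

end

theory Submission
  imports Defs
begin


definition lcv :: "nat \<Rightarrow> (nat \<Rightarrow> 'a::field vec) \<Rightarrow> (nat \<Rightarrow> 'a) \<Rightarrow> nat set \<Rightarrow> 'a vec" where
  "lcv n g c S = vec n (\<lambda>r. \<Sum>j\<in>S. c j * g j $ r)"

lemma lcv_carrier[simp]: "lcv n g c S \<in> carrier_vec n" unfolding lcv_def by simp
lemma lcv_index[simp]: "r < n \<Longrightarrow> lcv n g c S $ r = (\<Sum>j\<in>S. c j * g j $ r)" unfolding lcv_def by simp
lemma lcv_dim[simp]: "dim_vec (lcv n g c S) = n" unfolding lcv_def by simp

lemma mult_lcv:
  assumes M: "M \<in> carrier_mat n n" and g: "\<And>j. j \<in> S \<Longrightarrow> g j \<in> carrier_vec n" and S: "finite S"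
  shows "M *\<^sub>v lcv n g c S = lcv n (\<lambda>j. M *\<^sub>v g j) c S"
proof (rule eq_vecI)
  fix r assume r: "r < dim_vec (lcv n (\<lambda>j. M *\<^sub>v g j) c S)"
  hence r: "r < n" by simp
  have "(M *\<^sub>v lcv n g c S) $ r = (\<Sum>k<n. M $$ (r,k) * (\<Sum>j\<in>S. c j * g j $ k))"
    using M r by (simp add: scalar_prod_def lessThan_atLeast0)
  also have "\<dots> = (\<Sum>j\<in>S. c j * (\<Sum>k<n. M $$ (r,k) * g j $ k))"
    unfolding sum_distrib_left by (rule trans[OF sum.swap]) (simp add: mult.left_commute)
  also have "\<dots> = lcv n (\<lambda>j. M *\<^sub>v g j) c S $ r"
  proof -
    have "\<And>j. j \<in> S \<Longrightarrow> dim_vec (g j) = n" using g by auto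
    thus ?thesis using M r by (simp add: scalar_prod_def lessThan_atLeast0 row_def)
  qed
  finally show "(M *\<^sub>v lcv n g c S) $ r = lcv n (\<lambda>j. M *\<^sub>v g j) c S $ r" .
qed (use M in simp)

locale fbasis =
  fixes n :: nat and f :: "nat \<Rightarrow> 'a::field vec"
  assumes carr: "\<And>j. j < n \<Longrightarrow> f j \<in> carrier_vec n"
    and indep: "\<And>c. lcv n f c {..<n} = 0\<^sub>v n \<Longrightarrow> \<forall>j<n. c j = 0"
begin

definition F :: "'a mat" where "F = mat n n (\<lambda>(r,j). f j $ r)"

lemma F_carrier[simp]: "F \<in> carrier_mat n n" unfolding F_def by simp

lemma F_vec: "v \<in> carrier_vec n \<Longrightarrow> F *\<^sub>v v = lcv n f (\<lambda>j. v $ j) {..<n}"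
  by (rule eq_vecI) (auto simp: F_def scalar_prod_def row_def lessThan_atLeast0 mult.commute intro!: sum.cong)

lemma det_F: "det F \<noteq> 0"
proof
  assume "det F = 0"
  then obtain v where v: "v \<in> carrier_vec n" "v \<noteq> 0\<^sub>v n" "F *\<^sub>v v = 0\<^sub>v n"
    using det_0_iff_vec_prod_zero_field[OF F_carrier] by auto
  then have "\<forall>j<n. v $ j = 0" using indep[of "\<lambda>j. v $ j"] F_vec by auto
  then have "v = 0\<^sub>v n" using v(1) by (intro eq_vecI) auto
  with v(2) show False by simp
qed

lemma inv_ex: "\<exists>B. B \<in> carrier_mat n n \<and> B * F = 1\<^sub>m n \<and> F * B = 1\<^sub>m n"
  using det_non_zero_imp_unit[OF F_carrier det_F, unfolded Units_def, of "()"]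
  by (auto simp: ring_mat_def)

definition Fi :: "'a mat" where "Fi = (SOME B. B \<in> carrier_mat n n \<and> B * F = 1\<^sub>m n \<and> F * B = 1\<^sub>m n)"

lemma Fi: "Fi \<in> carrier_mat n n" "Fi * F = 1\<^sub>m n" "F * Fi = 1\<^sub>m n"
  using someI_ex[OF inv_ex] unfolding Fi_def by auto

definition coord :: "nat \<Rightarrow> 'a vec \<Rightarrow> 'a" where "coord j v = (Fi *\<^sub>v v) $ j"

lemma coord_lin: "j < n \<Longrightarrow> v \<in> carrier_vec n \<Longrightarrow> coord j v = (\<Sum>r<n. Fi $$ (j,r) * v $ r)"
  using Fi(1) by (simp add: coord_def scalar_prod_def row_def lessThan_atLeast0)

lemma spans: assumes v: "v \<in> carrier_vec n" shows "v = lcv n f (\<lambda>j. coord j v) {..<n}"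
proof -
  have "F *\<^sub>v (Fi *\<^sub>v v) = (F * Fi) *\<^sub>v v" by (rule assoc_mult_mat_vec[OF F_carrier Fi(1) v, symmetric])
  also have "(F * Fi) *\<^sub>v v = v" unfolding Fi(3) using v by simp
  finally have "v = F *\<^sub>v (Fi *\<^sub>v v)" by simp
  also have "\<dots> = lcv n f (\<lambda>j. coord j v) {..<n}" using Fi v by (simp add: F_vec coord_def)
  finally show ?thesis .
qed

lemma coord_lcv_basis: assumes j: "j < n" shows "coord j (lcv n f c {..<n}) = c j"
proof -
  have "lcv n f c {..<n} = F *\<^sub>v vec n c" by (auto simp: F_vec lcv_def intro!: eq_vecI sum.cong)
  moreover have "Fi *\<^sub>v (F *\<^sub>v vec n c) = (Fi * F) *\<^sub>v vec n c" by (rule assoc_mult_mat_vec[OF Fi(1) F_carrier vec_carrier, symmetric])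
  moreover have "(Fi * F) *\<^sub>v vec n c = vec n c" unfolding Fi(2) by simp
  ultimately have "Fi *\<^sub>v lcv n f c {..<n} = vec n c" by simp
  thus ?thesis using j by (simp add: coord_def)
qed

lemma coord_lcv: assumes j: "j < n" and g: "\<And>m. m \<in> S \<Longrightarrow> g m \<in> carrier_vec n" and S: "finite S"
  shows "coord j (lcv n g c S) = (\<Sum>m\<in>S. c m * coord j (g m))"
proof -
  have "coord j (lcv n g c S) = (\<Sum>r<n. Fi $$ (j,r) * (\<Sum>m\<in>S. c m * g m $ r))"
    using j by (simp add: coord_lin)
  also have "\<dots> = (\<Sum>m\<in>S. c m * (\<Sum>r<n. Fi $$ (j,r) * g m $ r))"
    unfolding sum_distrib_left by (rule trans[OF sum.swap]) (simp add: mult.left_commute)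
  also have "\<dots> = (\<Sum>m\<in>S. c m * coord j (g m))" using j g by (simp add: coord_lin)
  finally show ?thesis .
qed

lemma coord_add: "j < n \<Longrightarrow> v \<in> carrier_vec n \<Longrightarrow> w \<in> carrier_vec n \<Longrightarrow> coord j (v + w) = coord j v + coord j w"
  unfolding coord_def using mult_add_distrib_mat_vec[OF Fi(1), of v w] Fi(1) by simp
lemma coord_minus: "j < n \<Longrightarrow> v \<in> carrier_vec n \<Longrightarrow> w \<in> carrier_vec n \<Longrightarrow> coord j (v - w) = coord j v - coord j w"
  unfolding coord_def using mult_minus_distrib_mat_vec[OF Fi(1), of v w] Fi(1) by simp
lemma coord_smult: "j < n \<Longrightarrow> v \<in> carrier_vec n \<Longrightarrow> coord j (a \<cdot>\<^sub>v v) = a * coord j v"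
  unfolding coord_def using mult_mat_vec[OF Fi(1), of v a] Fi(1) by simp
lemma coord_zero: "j < n \<Longrightarrow> coord j (0\<^sub>v n) = 0"
  unfolding coord_def using Fi(1) by simp

lemma coord_f: assumes "j < n" "k < n" shows "coord j (f k) = (if j = k then 1 else 0)"
proof -
  have "f k = lcv n f (\<lambda>m. if m = k then 1 else 0) {..<n}"
  proof (rule eq_vecI)
    fix i assume i: "i < dim_vec (lcv n f (\<lambda>m. if m = k then 1 else 0) {..<n})"
    have "(\<Sum>j<n. (if j = k then 1 else 0) * f j $ i) = (\<Sum>j<n. if j = k then f j $ i else 0)"
      by (rule sum.cong) auto
    thus "f k $ i = lcv n f (\<lambda>m. if m = k then 1 else 0) {..<n} $ i" using i assms by simp
  qed (use carr[OF assms(2)] in simp)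
  hence "coord j (f k) = coord j (lcv n f (\<lambda>m. if m = k then 1 else 0) {..<n})" by (rule arg_cong)
  thus ?thesis using coord_lcv_basis[OF assms(1), of "\<lambda>m. if m = k then 1 else 0"] by simp
qed

lemma eq_by_coord: "v \<in> carrier_vec n \<Longrightarrow> w \<in> carrier_vec n \<Longrightarrow> (\<And>j. j < n \<Longrightarrow> coord j v = coord j w) \<Longrightarrow> v = w"
proof -
  assume v: "v \<in> carrier_vec n" and w: "w \<in> carrier_vec n" and c: "\<And>j. j < n \<Longrightarrow> coord j v = coord j w"
  have "lcv n f (\<lambda>j. coord j v) {..<n} = lcv n f (\<lambda>j. coord j w) {..<n}"
    using c by (auto simp: lcv_def intro!: eq_vecI sum.cong)
  thus "v = w" by (rule trans[OF spans[OF v] trans[OF _ spans[OF w, symmetric]]])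
qed

lemma f_nz: "k < n \<Longrightarrow> f k \<noteq> 0\<^sub>v n"
  using coord_f[of k k] coord_zero[of k] by auto

lemma coord_mult: assumes M: "M \<in> carrier_mat n n" and v: "v \<in> carrier_vec n" and j: "j < n"
  shows "coord j (M *\<^sub>v v) = (\<Sum>m<n. coord m v * coord j (M *\<^sub>v f m))"
proof -
  have "M *\<^sub>v v = M *\<^sub>v lcv n f (\<lambda>j. coord j v) {..<n}" by (rule arg_cong[OF spans[OF v]])
  also have "\<dots> = lcv n (\<lambda>m. M *\<^sub>v f m) (\<lambda>m. coord m v) {..<n}"
    using mult_lcv[OF M, of "{..<n}" f] carr by auto
  finally have "M *\<^sub>v v = lcv n (\<lambda>m. M *\<^sub>v f m) (\<lambda>m. coord m v) {..<n}" .
  hence "coord j (M *\<^sub>v v) = coord j (lcv n (\<lambda>m. M *\<^sub>v f m) (\<lambda>m. coord m v) {..<n})" by simp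
  also have "\<dots> = (\<Sum>m<n. coord m v * coord j (M *\<^sub>v f m))"
    by (rule coord_lcv[OF j]) (use M carr in auto)
  finally show ?thesis .
qed

lemma mat_eq_on_basis: assumes M: "M \<in> carrier_mat n n" and N: "N \<in> carrier_mat n n"
  and eq: "\<And>k. k < n \<Longrightarrow> M *\<^sub>v f k = N *\<^sub>v f k" shows "M = N"
proof -
  have mv: "M *\<^sub>v v = N *\<^sub>v v" if v: "v \<in> carrier_vec n" for v
  proof -
    have "M *\<^sub>v v = M *\<^sub>v lcv n f (\<lambda>j. coord j v) {..<n}" by (rule arg_cong[OF spans[OF v]])
    also have "\<dots> = lcv n (\<lambda>m. M *\<^sub>v f m) (\<lambda>m. coord m v) {..<n}"
      using mult_lcv[OF M, of "{..<n}" f] carr by auto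
    also have "\<dots> = lcv n (\<lambda>m. N *\<^sub>v f m) (\<lambda>m. coord m v) {..<n}"
      using eq by (auto simp: lcv_def intro!: eq_vecI sum.cong)
    also have "\<dots> = N *\<^sub>v lcv n f (\<lambda>j. coord j v) {..<n}"
      using mult_lcv[OF N, of "{..<n}" f] carr by auto
    also have "\<dots> = N *\<^sub>v v" by (rule arg_cong[OF spans[OF v, symmetric]])
    finally show ?thesis .
  qed
  show ?thesis
  proof (rule eq_matI)
    fix i j assume i: "i < dim_row N" and j: "j < dim_col N"
    have "M $$ (i,j) = (M *\<^sub>v unit_vec n j) $ i" using M N i j by simp
    also have "\<dots> = (N *\<^sub>v unit_vec n j) $ i" using mv[of "unit_vec n j"] by simp
    also have "\<dots> = N $$ (i,j)" using N i j by simp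
    finally show "M $$ (i,j) = N $$ (i,j)" .
  qed (use M N in auto)
qed

end


lemma smult_mat_vec: "M \<in> carrier_mat n m \<Longrightarrow> w \<in> carrier_vec m \<Longrightarrow> (c \<cdot>\<^sub>m M) *\<^sub>v w = c \<cdot>\<^sub>v (M *\<^sub>v w)"
  by (rule eq_vecI) (auto simp: scalar_prod_def sum_distrib_left mult.assoc)

lemma shift_mat_vec: assumes "(A::'a::field mat) \<in> carrier_mat n n" "w \<in> carrier_vec n"
  shows "(A - t \<cdot>\<^sub>m 1\<^sub>m n) *\<^sub>v w = A *\<^sub>v w - t \<cdot>\<^sub>v w"
proof -
  have "(A - t \<cdot>\<^sub>m 1\<^sub>m n) *\<^sub>v w = A *\<^sub>v w - (t \<cdot>\<^sub>m 1\<^sub>m n) *\<^sub>v w"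
    by (rule minus_mult_distrib_mat_vec) (use assms in auto)
  also have "(t \<cdot>\<^sub>m 1\<^sub>m n) *\<^sub>v w = t \<cdot>\<^sub>v w" using assms by (simp add: smult_mat_vec[of _ n n])
  finally show ?thesis .
qed

lemma shift_carrier[simp]: "A \<in> carrier_mat n n \<Longrightarrow> A - t \<cdot>\<^sub>m 1\<^sub>m n \<in> carrier_mat n n" by auto

lemma foldr_act:
  fixes A :: "'a::field mat"
  assumes A: "A \<in> carrier_mat n n" and v: "v \<in> carrier_vec n" and ev: "A *\<^sub>v v = \<mu> \<cdot>\<^sub>v v"
  shows "foldr (\<lambda>j M. ((1 / (th i - th j)) \<cdot>\<^sub>m (A - th j \<cdot>\<^sub>m 1\<^sub>m n)) * M) L (1\<^sub>m n) \<in> carrier_mat n n \<and>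
    foldr (\<lambda>j M. ((1 / (th i - th j)) \<cdot>\<^sub>m (A - th j \<cdot>\<^sub>m 1\<^sub>m n)) * M) L (1\<^sub>m n) *\<^sub>v v
     = (\<Prod>j\<leftarrow>L. (\<mu> - th j) / (th i - th j)) \<cdot>\<^sub>v v"
proof (induction L)
  case Nil then show ?case using v by simp
next
  case (Cons j L)
  let ?P = "foldr (\<lambda>j M. ((1 / (th i - th j)) \<cdot>\<^sub>m (A - th j \<cdot>\<^sub>m 1\<^sub>m n)) * M) L (1\<^sub>m n)"
  let ?c = "1 / (th i - th j)"
  let ?p = "(\<Prod>j\<leftarrow>L. (\<mu> - th j) / (th i - th j))"
  have P: "?P \<in> carrier_mat n n" and Pv: "?P *\<^sub>v v = ?p \<cdot>\<^sub>v v" using Cons by auto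
  have Q: "?c \<cdot>\<^sub>m (A - th j \<cdot>\<^sub>m 1\<^sub>m n) \<in> carrier_mat n n" using A by simp
  have "(?c \<cdot>\<^sub>m (A - th j \<cdot>\<^sub>m 1\<^sub>m n) * ?P) *\<^sub>v v = (?c \<cdot>\<^sub>m (A - th j \<cdot>\<^sub>m 1\<^sub>m n)) *\<^sub>v (?P *\<^sub>v v)"
    by (rule assoc_mult_mat_vec[OF Q P v])
  also have "\<dots> = ?c \<cdot>\<^sub>v ((A - th j \<cdot>\<^sub>m 1\<^sub>m n) *\<^sub>v (?p \<cdot>\<^sub>v v))"
    unfolding Pv using A v by (simp add: smult_mat_vec[of _ n n])
  also have "(A - th j \<cdot>\<^sub>m 1\<^sub>m n) *\<^sub>v (?p \<cdot>\<^sub>v v) = A *\<^sub>v (?p \<cdot>\<^sub>v v) - th j \<cdot>\<^sub>v (?p \<cdot>\<^sub>v v)"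
    using A v by (simp add: shift_mat_vec)
  also have "A *\<^sub>v (?p \<cdot>\<^sub>v v) = ?p \<cdot>\<^sub>v (\<mu> \<cdot>\<^sub>v v)" using mult_mat_vec[OF A v] ev by simp
  finally have "(?c \<cdot>\<^sub>m (A - th j \<cdot>\<^sub>m 1\<^sub>m n) * ?P) *\<^sub>v v
     = ?c \<cdot>\<^sub>v (?p \<cdot>\<^sub>v (\<mu> \<cdot>\<^sub>v v) - th j \<cdot>\<^sub>v (?p \<cdot>\<^sub>v v))" .
  also have "\<dots> = ((\<mu> - th j) / (th i - th j) * ?p) \<cdot>\<^sub>v v"
    using v by (intro eq_vecI) (auto simp: field_simps)
  finally show ?case using Q P by simp
qed

lemma smult_vec_zero_imp: assumes "c \<cdot>\<^sub>v v = 0\<^sub>v n" "v \<in> carrier_vec n" "v \<noteq> 0\<^sub>v n" shows "(c::'a::field) = 0"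
proof -
  obtain r where r: "r < n" "v $ r \<noteq> 0" using assms(2,3) by (metis eq_vecI carrier_vecD index_zero_vec(1,2))
  have "(c \<cdot>\<^sub>v v) $ r = 0" using assms(1) r by simp
  thus ?thesis using r assms(2) by simp
qed

lemma smult_vec_cancel: assumes "c \<cdot>\<^sub>v v = e \<cdot>\<^sub>v v" "v \<in> carrier_vec n" "v \<noteq> 0\<^sub>v n" shows "(c::'a::field) = e"
proof -
  have "(c - e) \<cdot>\<^sub>v v = 0\<^sub>v n"
  proof (rule eq_vecI)
    fix r assume "r < dim_vec (0\<^sub>v n :: 'a vec)"
    hence r: "r < n" by simp
    have "(c \<cdot>\<^sub>v v) $ r = (e \<cdot>\<^sub>v v) $ r" using assms(1) by simp
    thus "((c - e) \<cdot>\<^sub>v v) $ r = 0\<^sub>v n $ r" using r assms(2) by (simp add: algebra_simps)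
  qed (use assms in simp)
  from smult_vec_zero_imp[OF this assms(2,3)] show ?thesis by simp
qed

lemma mat_vec_zero[simp]: "M *\<^sub>v 0\<^sub>v (dim_col M) = 0\<^sub>v (dim_row M)"
  by (rule eq_vecI) (auto simp: scalar_prod_def)

definition evec :: "'a::field mat \<Rightarrow> 'a \<Rightarrow> 'a vec" where
  "evec A \<mu> = (SOME v. v \<in> carrier_vec (dim_row A) \<and> v \<noteq> 0\<^sub>v (dim_row A) \<and> A *\<^sub>v v = \<mu> \<cdot>\<^sub>v v)"

locale MF =
  fixes d :: nat and A :: "'a::field mat" and th :: "nat \<Rightarrow> 'a"
  assumes mf: "multiplicity_free d A" and eo: "eigen_ordering d A th"
begin

lemma A_carrier[simp]: "A \<in> carrier_mat (Suc d) (Suc d)" using mf unfolding multiplicity_free_def by auto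
lemma th_inj: "i \<le> d \<Longrightarrow> j \<le> d \<Longrightarrow> th i = th j \<longleftrightarrow> i = j"
  using eo unfolding eigen_ordering_def inj_on_def by auto

lemma evec: assumes "j \<le> d"
  shows "evec A (th j) \<in> carrier_vec (Suc d)" "evec A (th j) \<noteq> 0\<^sub>v (Suc d)"
    "A *\<^sub>v evec A (th j) = th j \<cdot>\<^sub>v evec A (th j)"
proof -
  have "eigenvalue A (th j)" using eo assms unfolding eigen_ordering_def by auto
  then have "\<exists>v. v \<in> carrier_vec (dim_row A) \<and> v \<noteq> 0\<^sub>v (dim_row A) \<and> A *\<^sub>v v = th j \<cdot>\<^sub>v v"
    unfolding eigenvalue_def eigenvector_def by auto
  from someI_ex[OF this] have "evec A (th j) \<in> carrier_vec (dim_row A) \<and> evec A (th j) \<noteq> 0\<^sub>v (dim_row A) \<and>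
    A *\<^sub>v evec A (th j) = th j \<cdot>\<^sub>v evec A (th j)" unfolding evec_def .
  moreover have dA: "dim_row A = Suc d" using A_carrier by blast
  ultimately show "evec A (th j) \<in> carrier_vec (Suc d)" "evec A (th j) \<noteq> 0\<^sub>v (Suc d)"
    "A *\<^sub>v evec A (th j) = th j \<cdot>\<^sub>v evec A (th j)" by simp_all
qed

lemma prim_idem_carrier[simp]: "prim_idem d A th i \<in> carrier_mat (Suc d) (Suc d)"
  unfolding prim_idem_def
  using foldr_act[OF A_carrier evec(1)[of 0] evec(3)[of 0], where th=th and i=i and L="filter (\<lambda>j. j \<noteq> i) [0..<Suc d]"] by simp

lemma prim_idem_act: assumes v: "v \<in> carrier_vec (Suc d)" and ev: "A *\<^sub>v v = \<mu> \<cdot>\<^sub>v v" and i: "i \<le> d"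
  shows "prim_idem d A th i *\<^sub>v v = (\<Prod>j\<in>{..d} - {i}. (\<mu> - th j) / (th i - th j)) \<cdot>\<^sub>v v"
proof -
  have "prim_idem d A th i *\<^sub>v v = (\<Prod>j\<leftarrow>filter (\<lambda>j. j \<noteq> i) [0..<Suc d]. (\<mu> - th j) / (th i - th j)) \<cdot>\<^sub>v v"
    unfolding prim_idem_def using foldr_act[OF A_carrier v ev, where th=th and i=i and L="filter (\<lambda>j. j \<noteq> i) [0..<Suc d]"] by simp
  also have "(\<Prod>j\<leftarrow>filter (\<lambda>j. j \<noteq> i) [0..<Suc d]. (\<mu> - th j) / (th i - th j))
     = (\<Prod>j\<in>{..d} - {i}. (\<mu> - th j) / (th i - th j))"
  proof -
    have "set (filter (\<lambda>j. j \<noteq> i) [0..<Suc d]) = {..d} - {i}" by auto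
    moreover have "distinct (filter (\<lambda>j. j \<noteq> i) [0..<Suc d])" by simp
    ultimately show ?thesis by (metis prod.distinct_set_conv_list)
  qed
  finally show ?thesis .
qed

lemma prim_idem_evec: assumes i: "i \<le> d" and k: "k \<le> d"
  shows "prim_idem d A th i *\<^sub>v evec A (th k) = (if k = i then evec A (th k) else 0\<^sub>v (Suc d))"
proof -
  have "prim_idem d A th i *\<^sub>v evec A (th k) = (\<Prod>j\<in>{..d} - {i}. (th k - th j) / (th i - th j)) \<cdot>\<^sub>v evec A (th k)"
    by (rule prim_idem_act[OF evec(1)[OF k] evec(3)[OF k] i])
  moreover have "k = i \<Longrightarrow> (\<Prod>j\<in>{..d} - {i}. (th k - th j) / (th i - th j)) = 1"
    using i th_inj by (intro prod.neutral) auto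
  moreover have "k \<noteq> i \<Longrightarrow> (\<Prod>j\<in>{..d} - {i}. (th k - th j) / (th i - th j)) = 0"
    using i k by (intro prod_zero) (auto intro: bexI[of _ k])
  ultimately show ?thesis using evec(1)[OF k] by auto
qed

lemma indep: assumes "lcv (Suc d) (\<lambda>j. evec A (th j)) c {..<Suc d} = 0\<^sub>v (Suc d)"
  shows "\<forall>j<Suc d. c j = 0"
proof (intro allI impI)
  fix i assume "i < Suc d" hence i: "i \<le> d" by simp
  have "prim_idem d A th i *\<^sub>v lcv (Suc d) (\<lambda>j. evec A (th j)) c {..<Suc d}
    = lcv (Suc d) (\<lambda>j. prim_idem d A th i *\<^sub>v evec A (th j)) c {..<Suc d}"
    by (rule mult_lcv) (use evec in auto)
  also have "\<dots> = c i \<cdot>\<^sub>v evec A (th i)"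
  proof (rule eq_vecI)
    fix r assume r: "r < dim_vec (c i \<cdot>\<^sub>v evec A (th i))"
    hence r': "r < Suc d" using evec(1)[OF i] by simp
    have "(\<Sum>j<Suc d. c j * (prim_idem d A th i *\<^sub>v evec A (th j)) $ r)
      = (\<Sum>j<Suc d. if j = i then c j * evec A (th j) $ r else 0)"
      using prim_idem_evec[OF i] r' by (intro sum.cong) auto
    thus "lcv (Suc d) (\<lambda>j. prim_idem d A th i *\<^sub>v evec A (th j)) c {..<Suc d} $ r = (c i \<cdot>\<^sub>v evec A (th i)) $ r"
      using r' i r by simp
  qed (use evec(1)[OF i] in simp)
  finally have "c i \<cdot>\<^sub>v evec A (th i) = prim_idem d A th i *\<^sub>v 0\<^sub>v (Suc d)" using assms by simp
  also have "\<dots> = 0\<^sub>v (Suc d)" using mat_vec_zero[of "prim_idem d A th i"] prim_idem_carrier[of i] by (metis carrier_matD(1,2))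
  finally show "c i = 0" using evec[OF i] smult_vec_zero_imp by blast
qed

sublocale fbasis "Suc d" "\<lambda>j. evec A (th j)"
  by unfold_locales (use evec indep in auto)

end


lemma zero_mat_vec: "v \<in> carrier_vec m \<Longrightarrow> 0\<^sub>m n m *\<^sub>v v = 0\<^sub>v n"
  by (intro eq_vecI) (auto simp: scalar_prod_def intro!: sum.neutral)

context MF begin

abbreviation x where "x j \<equiv> evec A (th j)"
abbreviation E where "E i \<equiv> prim_idem d A th i"

lemma x_carrier[simp]: "j \<le> d \<Longrightarrow> x j \<in> carrier_vec (Suc d)" using evec(1) .
lemma x_dim[simp]: "j \<le> d \<Longrightarrow> dim_vec (x j) = Suc d" using evec(1) by auto
lemma E_mult_carrier[simp]: "v \<in> carrier_vec (Suc d) \<Longrightarrow> E i *\<^sub>v v \<in> carrier_vec (Suc d)"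
  using mult_mat_vec_carrier[OF prim_idem_carrier] by blast
lemma E_mult_dim[simp]: "dim_vec (E i *\<^sub>v v) = Suc d"
  using prim_idem_carrier[of i] by (metis carrier_matD(1) dim_mult_mat_vec)

lemma coord_x: "j \<le> d \<Longrightarrow> k \<le> d \<Longrightarrow> coord j (x k) = (if j = k then 1 else 0)"
  using coord_f by simp

lemma E_coord: assumes v: "v \<in> carrier_vec (Suc d)" and i: "i \<le> d"
  shows "E i *\<^sub>v v = coord i v \<cdot>\<^sub>v x i"
proof -
  have "E i *\<^sub>v v = E i *\<^sub>v lcv (Suc d) x (\<lambda>j. coord j v) {..<Suc d}" by (rule arg_cong[OF spans[OF v]])
  also have "\<dots> = lcv (Suc d) (\<lambda>j. E i *\<^sub>v x j) (\<lambda>j. coord j v) {..<Suc d}"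
    by (rule mult_lcv) auto
  also have "\<dots> = coord i v \<cdot>\<^sub>v x i"
  proof (rule eq_vecI)
    fix r assume r: "r < dim_vec (coord i v \<cdot>\<^sub>v x i)"
    hence r': "r < Suc d" using i by simp
    have "(\<Sum>j<Suc d. coord j v * (E i *\<^sub>v x j) $ r)
      = (\<Sum>j<Suc d. if j = i then coord j v * x j $ r else 0)"
      using prim_idem_evec[OF i] r' by (intro sum.cong) auto
    thus "lcv (Suc d) (\<lambda>j. E i *\<^sub>v x j) (\<lambda>j. coord j v) {..<Suc d} $ r = (coord i v \<cdot>\<^sub>v x i) $ r"
      using r' i r by simp
  qed (use i in simp)
  finally show ?thesis .
qed

lemma coord_A: assumes v: "v \<in> carrier_vec (Suc d)" and j: "j \<le> d"
  shows "coord j (A *\<^sub>v v) = th j * coord j v"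
proof -
  have "coord j (A *\<^sub>v v) = (\<Sum>m<Suc d. coord m v * coord j (A *\<^sub>v x m))"
    using coord_mult[OF A_carrier v] j by simp
  also have "\<dots> = (\<Sum>m<Suc d. if m = j then th j * coord j v else 0)"
    using j by (intro sum.cong) (auto simp: evec(3) coord_smult coord_x)
  also have "\<dots> = th j * coord j v" using j by (subst sum.delta) auto
  finally show ?thesis .
qed

lemma eig_1dim: assumes v: "v \<in> carrier_vec (Suc d)" and ev: "A *\<^sub>v v = th i \<cdot>\<^sub>v v" and i: "i \<le> d"
  shows "v = coord i v \<cdot>\<^sub>v x i"
proof (rule eq_by_coord)
  fix j assume "j < Suc d" hence j: "j \<le> d" by simp
  have "coord j (A *\<^sub>v v) = th i * coord j v" using ev coord_smult[of j v] j v by simp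
  hence "th j * coord j v = th i * coord j v" using coord_A[OF v j] by simp
  hence "j \<noteq> i \<Longrightarrow> coord j v = 0" using th_inj[OF i j] by auto
  thus "coord j v = coord j (coord i v \<cdot>\<^sub>v x i)" using j i by (auto simp: coord_smult coord_x)
qed (use v i in auto)

lemma EME: assumes N: "N \<in> carrier_mat (Suc d) (Suc d)" and k: "k \<le> d" and j: "j \<le> d"
  shows "E k * N * E j = 0\<^sub>m (Suc d) (Suc d) \<longleftrightarrow> coord k (N *\<^sub>v x j) = 0"
proof -
  have act: "(E k * N * E j) *\<^sub>v x m = (if m = j then coord k (N *\<^sub>v x j) \<cdot>\<^sub>v x k else 0\<^sub>v (Suc d))"
    if m: "m \<le> d" for m
  proof -
    have EN: "E k * N \<in> carrier_mat (Suc d) (Suc d)" using N by (intro mult_carrier_mat) auto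
    have "(E k * N * E j) *\<^sub>v x m = (E k * N) *\<^sub>v (E j *\<^sub>v x m)"
      by (rule assoc_mult_mat_vec[OF EN prim_idem_carrier x_carrier[OF m]])
    also have "\<dots> = E k *\<^sub>v (N *\<^sub>v (E j *\<^sub>v x m))"
      by (rule assoc_mult_mat_vec[OF prim_idem_carrier N E_mult_carrier[OF x_carrier[OF m]]])
    also have "\<dots> = (if m = j then coord k (N *\<^sub>v x j) \<cdot>\<^sub>v x k else 0\<^sub>v (Suc d))"
    proof (cases "m = j")
      case True thus ?thesis using prim_idem_evec[OF j m] E_coord[OF mult_mat_vec_carrier[OF N x_carrier[OF m]] k] by simp
    next
      case False
      have "N *\<^sub>v 0\<^sub>v (Suc d) = 0\<^sub>v (Suc d)" using mat_vec_zero[of N] N by (metis carrier_matD(1,2))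
      moreover have "E k *\<^sub>v 0\<^sub>v (Suc d) = 0\<^sub>v (Suc d)" using mat_vec_zero[of "E k"] prim_idem_carrier[of k] by (metis carrier_matD(1,2))
      ultimately show ?thesis using prim_idem_evec[OF j m] False by simp
    qed
    finally show ?thesis .
  qed
  have carr: "E k * N * E j \<in> carrier_mat (Suc d) (Suc d)" using N by (intro mult_carrier_mat) auto
  show ?thesis
  proof
    assume z: "E k * N * E j = 0\<^sub>m (Suc d) (Suc d)"
    have "coord k (N *\<^sub>v x j) \<cdot>\<^sub>v x k = (E k * N * E j) *\<^sub>v x j" using act[OF j] by simp
    also have "\<dots> = 0\<^sub>v (Suc d)" unfolding z by (rule zero_mat_vec) (use j in simp)
    finally show "coord k (N *\<^sub>v x j) = 0" using smult_vec_zero_imp evec[OF k] by blast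
  next
    assume z: "coord k (N *\<^sub>v x j) = 0"
    show "E k * N * E j = 0\<^sub>m (Suc d) (Suc d)"
    proof (rule mat_eq_on_basis[OF carr zero_carrier_mat])
      fix m assume "m < Suc d" hence m: "m \<le> d" by simp
      have "0\<^sub>m (Suc d) (Suc d) *\<^sub>v x m = 0\<^sub>v (Suc d)" by (rule zero_mat_vec) (use m in simp)
      moreover have "0 \<cdot>\<^sub>v x k = 0\<^sub>v (Suc d)" using k by auto
      ultimately show "(E k * N * E j) *\<^sub>v x m = 0\<^sub>m (Suc d) (Suc d) *\<^sub>v x m" using act[OF m] z k by auto
    qed
  qed
qed

lemma finsum_E: assumes w: "\<And>h. h \<in> S \<Longrightarrow> w h \<in> carrier_vec (Suc d)" and S: "S \<subseteq> {..d}"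
  shows "finsum_vec TYPE('a) (Suc d) (\<lambda>h. E h *\<^sub>v w h) S = lcv (Suc d) x (\<lambda>h. coord h (w h)) S"
proof -
  have fin: "finite S" using S finite_subset by blast
  have Ec: "(\<lambda>h. E h *\<^sub>v w h) \<in> S \<rightarrow> carrier_vec (Suc d)" using w by auto
  show ?thesis
  proof (rule eq_vecI)
    fix r assume "r < dim_vec (lcv (Suc d) x (\<lambda>h. coord h (w h)) S)"
    hence r: "r < Suc d" by simp
    have "finsum_vec TYPE('a) (Suc d) (\<lambda>h. E h *\<^sub>v w h) S $ r = (\<Sum>h\<in>S. (E h *\<^sub>v w h) $ r)"
      by (rule index_finsum_vec[OF fin r Ec])
    also have "\<dots> = (\<Sum>h\<in>S. coord h (w h) * x h $ r)"
      using S w r by (intro sum.cong) (auto simp: E_coord)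
    finally show "finsum_vec TYPE('a) (Suc d) (\<lambda>h. E h *\<^sub>v w h) S $ r = lcv (Suc d) x (\<lambda>h. coord h (w h)) S $ r"
      using r by simp
  next
    show "dim_vec (finsum_vec TYPE('a) (Suc d) (\<lambda>h. E h *\<^sub>v w h) S) = dim_vec (lcv (Suc d) x (\<lambda>h. coord h (w h)) S)"
      using finsum_vec_closed[OF Ec] by simp
  qed
qed

lemma subspace_sum_char: assumes S: "S \<subseteq> {..d}"
  shows "subspace_sum d E S = {v \<in> carrier_vec (Suc d). \<forall>j\<le>d. j \<notin> S \<longrightarrow> coord j v = 0}"
proof (intro equalityI subsetI)
  fix v assume "v \<in> subspace_sum d E S"
  then obtain w where w: "\<And>h. h \<in> S \<Longrightarrow> w h \<in> carrier_vec (Suc d)"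
    and v: "v = finsum_vec TYPE('a) (Suc d) (\<lambda>h. E h *\<^sub>v w h) S"
    unfolding subspace_sum_def by auto
  have v': "v = lcv (Suc d) x (\<lambda>h. coord h (w h)) S" using v finsum_E[OF w S] by simp
  have fin: "finite S" using S finite_subset by blast
  show "v \<in> {v \<in> carrier_vec (Suc d). \<forall>j\<le>d. j \<notin> S \<longrightarrow> coord j v = 0}"
  proof (intro CollectI conjI allI impI)
    fix j assume j: "j \<le> d" "j \<notin> S"
    have "coord j v = (\<Sum>h\<in>S. coord h (w h) * coord j (x h))"
      unfolding v' by (rule coord_lcv) (use j S fin in auto)
    also have "\<dots> = 0"
    proof (intro sum.neutral ballI)
      fix h assume "h \<in> S" hence "h \<le> d" "h \<noteq> j" using S j by auto
      thus "coord h (w h) * coord j (x h) = 0" using j by (simp add: coord_x)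
    qed
    finally show "coord j v = 0" .
  qed (use v' in simp)
next
  fix v assume v: "v \<in> {v \<in> carrier_vec (Suc d). \<forall>j\<le>d. j \<notin> S \<longrightarrow> coord j v = 0}"
  hence vc: "v \<in> carrier_vec (Suc d)" and z: "\<And>j. j \<le> d \<Longrightarrow> j \<notin> S \<Longrightarrow> coord j v = 0" by auto
  have "finsum_vec TYPE('a) (Suc d) (\<lambda>h. E h *\<^sub>v v) S = lcv (Suc d) x (\<lambda>h. coord h v) S"
    using finsum_E[OF _ S, of "\<lambda>h. v"] vc by simp
  also have "\<dots> = lcv (Suc d) x (\<lambda>h. coord h v) {..<Suc d}"
  proof -
    have "(\<Sum>j\<in>S. coord j v * x j $ r) = (\<Sum>j<Suc d. coord j v * x j $ r)" for r
      by (rule sum.mono_neutral_left) (use S z in auto)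
    thus ?thesis unfolding lcv_def by simp
  qed
  also have "\<dots> = v" using spans[OF vc] by simp
  finally show "v \<in> subspace_sum d E S" unfolding subspace_sum_def using vc by auto
qed

end

lemma trace_rank1: assumes M: "M \<in> carrier_mat n n"
  and act: "\<And>v. v \<in> carrier_vec n \<Longrightarrow> M *\<^sub>v v = (\<Sum>r<n. L r * v $ r) \<cdot>\<^sub>v w" and w: "w \<in> carrier_vec n"
  shows "mtrace M = (\<Sum>r<n. L r * w $ r)"
proof -
  have "M $$ (r, r) = L r * w $ r" if r: "r < n" for r
  proof -
    have "M $$ (r,r) = (M *\<^sub>v unit_vec n r) $ r" using M r by simp
    also have "\<dots> = (\<Sum>s<n. L s * unit_vec n r $ s) * w $ r" using act[of "unit_vec n r"] r w by simp
    also have "(\<Sum>s<n. L s * unit_vec n r $ s) = L r" using r by (simp add: unit_vec_def if_distrib cong: if_cong)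
    finally show ?thesis .
  qed
  thus ?thesis unfolding mtrace_def using M by simp
qed


fun useq :: "'a::field mat \<Rightarrow> (nat \<Rightarrow> 'a) \<Rightarrow> 'a vec \<Rightarrow> nat \<Rightarrow> 'a vec" where
  "useq A th y0 0 = y0"
| "useq A th y0 (Suc k) = (A - th k \<cdot>\<^sub>m 1\<^sub>m (dim_row A)) *\<^sub>v useq A th y0 k"

locale LS =
  fixes d :: nat and A As :: "'a::field mat" and th ths :: "nat \<Rightarrow> 'a"
  assumes ls: "leonard_system d A As th ths"
begin

sublocale XA: MF d A th using ls unfolding leonard_system_def by unfold_locales auto
sublocale YS: MF d As ths using ls unfolding leonard_system_def by unfold_locales auto

abbreviation xc where "xc \<equiv> XA.coord"
abbreviation yc where "yc \<equiv> YS.coord"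
abbreviation y where "y \<equiv> YS.x"
abbreviation u where "u \<equiv> useq A th (y 0)"
abbreviation Bp where "Bp k \<equiv> (\<Prod>m<k. yc (Suc m) (A *\<^sub>v y m))"

lemma dA: "dim_row A = Suc d" using XA.A_carrier by blast

lemma TY0: "k \<le> d \<Longrightarrow> j \<le> d \<Longrightarrow> Suc k < j \<or> Suc j < k \<Longrightarrow> yc k (A *\<^sub>v y j) = 0"
  using ls YS.EME[OF XA.A_carrier, of k j] unfolding leonard_system_def by auto
lemma TY1: "j < d \<Longrightarrow> yc (Suc j) (A *\<^sub>v y j) \<noteq> 0"
  using ls YS.EME[OF XA.A_carrier, of "Suc j" j] unfolding leonard_system_def by auto
lemma TX0: "k \<le> d \<Longrightarrow> j \<le> d \<Longrightarrow> Suc k < j \<or> Suc j < k \<Longrightarrow> xc k (As *\<^sub>v XA.x j) = 0"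
  using ls XA.EME[OF YS.A_carrier, of k j] unfolding leonard_system_def by auto
lemma TX1: "j < d \<Longrightarrow> xc (Suc j) (As *\<^sub>v XA.x j) \<noteq> 0"
  using ls XA.EME[OF YS.A_carrier, of "Suc j" j] unfolding leonard_system_def by auto
lemma TX2: "j < d \<Longrightarrow> xc j (As *\<^sub>v XA.x (Suc j)) \<noteq> 0"
  using ls XA.EME[OF YS.A_carrier, of j "Suc j"] unfolding leonard_system_def by auto

lemma u_carrier[simp]: "u k \<in> carrier_vec (Suc d)"
proof (induction k)
  case (Suc k) thus ?case using mult_mat_vec_carrier[OF shift_carrier[OF XA.A_carrier, of "th k"]] by (simp add: dA)
qed simp

lemma u_Suc: "u (Suc k) = A *\<^sub>v u k - th k \<cdot>\<^sub>v u k"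
  using shift_mat_vec[OF XA.A_carrier u_carrier] by (simp add: dA)

lemma yc_A: assumes v: "v \<in> carrier_vec (Suc d)" and j: "j \<le> d"
  shows "yc j (A *\<^sub>v v) = (\<Sum>m<Suc d. yc m v * yc j (A *\<^sub>v y m))"
  using YS.coord_mult[OF XA.A_carrier v] j by simp

lemma yc_u: "k \<le> d \<Longrightarrow> (\<forall>j. k < j \<and> j \<le> d \<longrightarrow> yc j (u k) = 0) \<and> yc k (u k) = Bp k"
proof (induction k)
  case 0
  then show ?case by (auto simp: YS.coord_x)
next
  case (Suc k)
  hence k: "k \<le> d" and IH0: "\<And>j. k < j \<Longrightarrow> j \<le> d \<Longrightarrow> yc j (u k) = 0" and IH1: "yc k (u k) = Bp k" by auto
  have yAu: "yc j (A *\<^sub>v u k) = (if j = Suc k then Bp (Suc k) else 0)" if j: "Suc k \<le> j" "j \<le> d" for j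
  proof -
    have "yc j (A *\<^sub>v u k) = (\<Sum>m<Suc d. yc m (u k) * yc j (A *\<^sub>v y m))" by (rule yc_A) (use j in auto)
    also have "\<dots> = (\<Sum>m<Suc d. if m = k then yc k (u k) * yc j (A *\<^sub>v y k) else 0)"
    proof (rule sum.cong)
      fix m assume m: "m \<in> {..<Suc d}"
      show "yc m (u k) * yc j (A *\<^sub>v y m) = (if m = k then yc k (u k) * yc j (A *\<^sub>v y k) else 0)"
      proof (cases "m = k")
        case False
        show ?thesis
        proof (cases "k < m")
          case True thus ?thesis using IH0 m by auto
        next
          case False2: False
          hence "m < k" using False by simp
          hence "yc j (A *\<^sub>v y m) = 0" using TY0[of j m] j m by auto
          thus ?thesis using False by simp
        qed
      qed simp
    qed simp
    also have "\<dots> = yc k (u k) * yc j (A *\<^sub>v y k)" using k by (subst sum.delta) auto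
    also have "\<dots> = (if j = Suc k then Bp (Suc k) else 0)"
      using IH1 TY0[of j k] j k by (auto simp: mult.commute)
    finally show ?thesis .
  qed
  have "yc j (u (Suc k)) = yc j (A *\<^sub>v u k) - th k * yc j (u k)" if "j \<le> d" for j
  proof -
    have j: "j < Suc d" using that by simp
    show ?thesis unfolding u_Suc
      using YS.coord_minus[OF j mult_mat_vec_carrier[OF XA.A_carrier u_carrier] smult_carrier_vec[THEN iffD2, OF u_carrier]]
        YS.coord_smult[OF j u_carrier] by simp
  qed
  thus ?case using yAu IH0 Suc.prems by auto
qed

lemma Bp_nz: "k \<le> d \<Longrightarrow> Bp k \<noteq> 0"
  using TY1 by (auto simp: prod_zero_iff)

lemma xc_u: "j \<le> d \<Longrightarrow> xc j (u k) = xc j (y 0) * (\<Prod>h<k. th j - th h)"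
proof (induction k)
  case (Suc k)
  have "xc j (u (Suc k)) = th j * xc j (u k) - th k * xc j (u k)"
  proof -
    have j: "j < Suc d" using Suc.prems by simp
    show ?thesis unfolding u_Suc
      using XA.coord_minus[OF j mult_mat_vec_carrier[OF XA.A_carrier u_carrier] smult_carrier_vec[THEN iffD2, OF u_carrier]]
        XA.coord_smult[OF j u_carrier] XA.coord_A[OF u_carrier Suc.prems] by simp
  qed
  thus ?case using Suc by (simp add: algebra_simps)
qed simp

lemma xc_u_low: "j \<le> d \<Longrightarrow> j < k \<Longrightarrow> xc j (u k) = 0"
  using xc_u by (auto intro!: prod_zero)

lemma yc_u_high: "k < j \<Longrightarrow> j \<le> d \<Longrightarrow> yc j (u k) = 0"
proof (cases "k \<le> d")
  case True thus "k < j \<Longrightarrow> j \<le> d \<Longrightarrow> yc j (u k) = 0" using yc_u by auto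
qed simp

lemma yc_lcv_u: "j \<le> d \<Longrightarrow> yc j (lcv (Suc d) u c {..<Suc d}) = (\<Sum>m<Suc d. c m * yc j (u m))"
  by (rule YS.coord_lcv) auto
lemma xc_lcv_u: "j \<le> d \<Longrightarrow> xc j (lcv (Suc d) u c {..<Suc d}) = (\<Sum>m<Suc d. c m * xc j (u m))"
  by (rule XA.coord_lcv) auto

lemma tri_y: assumes z: "\<And>j. s \<le> j \<Longrightarrow> j \<le> d \<Longrightarrow> yc j (lcv (Suc d) u c {..<Suc d}) = 0"
  shows "s \<le> m \<Longrightarrow> m \<le> d \<Longrightarrow> c m = 0"
proof (induction "d - m" arbitrary: m rule: less_induct)
  case less
  have "yc m (lcv (Suc d) u c {..<Suc d}) = (\<Sum>m'<Suc d. c m' * yc m (u m'))" using yc_lcv_u less by simp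
  also have "\<dots> = (\<Sum>m'<Suc d. if m' = m then c m * Bp m else 0)"
  proof (rule sum.cong)
    fix m' assume m': "m' \<in> {..<Suc d}"
    show "c m' * yc m (u m') = (if m' = m then c m * Bp m else 0)"
    proof (cases "m' = m")
      case True thus ?thesis using yc_u less by auto
    next
      case False
      show ?thesis
      proof (cases "m' < m")
        case True thus ?thesis using yc_u_high less False by auto
      next
        case False2: False
        hence "d - m' < d - m" "s \<le> m'" "m' \<le> d" using False less m' by auto
        thus ?thesis using less.hyps False by auto
      qed
    qed
  qed simp
  also have "\<dots> = c m * Bp m" using less by (subst sum.delta) auto
  finally have "c m * Bp m = 0" using z less by simp
  thus ?case using Bp_nz less by simp
qed

lemma u_indep: "lcv (Suc d) u c {..<Suc d} = 0\<^sub>v (Suc d) \<Longrightarrow> \<forall>j<Suc d. c j = 0"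
  using tri_y[of 0 c] YS.coord_zero by auto

sublocale U: fbasis "Suc d" u
  by unfold_locales (use u_indep in auto)

lemma y0_xc_nz: assumes k: "k \<le> d" shows "xc k (y 0) \<noteq> 0"
proof
  assume z: "xc k (y 0) = 0"
  have "xc k (XA.x k) = xc k (lcv (Suc d) u (\<lambda>m. U.coord m (XA.x k)) {..<Suc d})"
    by (rule arg_cong[OF U.spans]) (use k in simp)
  also have "\<dots> = (\<Sum>m<Suc d. U.coord m (XA.x k) * xc k (u m))" using xc_lcv_u k by simp
  also have "\<dots> = 0" using xc_u[OF k] z by simp
  finally show False using XA.coord_x[OF k k] by simp
qed

lemma xc_u_diag: "k \<le> d \<Longrightarrow> xc k (u k) \<noteq> 0"
  using xc_u y0_xc_nz XA.th_inj by (auto simp: prod_zero_iff)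

lemma tri_x: assumes z: "\<And>j. j < s \<Longrightarrow> j \<le> d \<Longrightarrow> xc j (lcv (Suc d) u c {..<Suc d}) = 0"
  shows "m < s \<Longrightarrow> m \<le> d \<Longrightarrow> c m = 0"
proof (induction m rule: less_induct)
  case (less m)
  have "xc m (lcv (Suc d) u c {..<Suc d}) = (\<Sum>m'<Suc d. c m' * xc m (u m'))" using xc_lcv_u less by simp
  also have "\<dots> = (\<Sum>m'<Suc d. if m' = m then c m * xc m (u m) else 0)"
  proof (rule sum.cong)
    fix m' assume m': "m' \<in> {..<Suc d}"
    show "c m' * xc m (u m') = (if m' = m then c m * xc m (u m) else 0)"
    proof (cases "m' = m")
      case False
      show ?thesis
      proof (cases "m' < m")
        case True thus ?thesis using less False by auto
      next
        case False2: False
        thus ?thesis using xc_u_low less False by auto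
      qed
    qed simp
  qed simp
  also have "\<dots> = c m * xc m (u m)" using less by (subst sum.delta) auto
  finally have "c m * xc m (u m) = 0" using z less by simp
  thus ?case using xc_u_diag less by simp
qed

lemma Ucoord_hi: assumes v: "v \<in> carrier_vec (Suc d)" and z: "\<And>j. s \<le> j \<Longrightarrow> j \<le> d \<Longrightarrow> yc j v = 0"
  and m: "s \<le> m" "m \<le> d" shows "U.coord m v = 0"
proof -
  have e: "lcv (Suc d) u (\<lambda>m. U.coord m v) {..<Suc d} = v" by (rule sym[OF U.spans[OF v]])
  show ?thesis by (rule tri_y[of s "\<lambda>m. U.coord m v" m]) (use z m in \<open>simp_all only: e\<close>)
qed

lemma Ucoord_lo: assumes v: "v \<in> carrier_vec (Suc d)" and z: "\<And>j. j < s \<Longrightarrow> j \<le> d \<Longrightarrow> xc j v = 0"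
  and m: "m < s" "m \<le> d" shows "U.coord m v = 0"
proof -
  have e: "lcv (Suc d) u (\<lambda>m. U.coord m v) {..<Suc d} = v" by (rule sym[OF U.spans[OF v]])
  show ?thesis by (rule tri_x[of s "\<lambda>m. U.coord m v" m]) (use z m in \<open>simp_all only: e\<close>)
qed

end


lemma vec_minus_plus: "a \<in> carrier_vec n \<Longrightarrow> b \<in> carrier_vec n \<Longrightarrow> a - b + b = (a :: 'a :: ab_group_add vec)"
  by (intro eq_vecI) auto

context LS begin

definition phi where "phi i = U.coord (i - 1) ((As - ths i \<cdot>\<^sub>m 1\<^sub>m (Suc d)) *\<^sub>v u i)"

lemma As_u_carrier[simp]: "As *\<^sub>v u i \<in> carrier_vec (Suc d)"
  using mult_mat_vec_carrier[OF YS.A_carrier u_carrier] .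
lemma A_u_carrier[simp]: "A *\<^sub>v u i \<in> carrier_vec (Suc d)"
  using mult_mat_vec_carrier[OF XA.A_carrier u_carrier] .

lemma xc_As: "v \<in> carrier_vec (Suc d) \<Longrightarrow> j \<le> d \<Longrightarrow> xc j (As *\<^sub>v v) = (\<Sum>m<Suc d. xc m v * xc j (As *\<^sub>v XA.x m))"
  by (rule XA.coord_mult[OF YS.A_carrier]) auto

lemma As_u: assumes i: "1 \<le> i" "i \<le> d"
  shows "As *\<^sub>v u i = ths i \<cdot>\<^sub>v u i + phi i \<cdot>\<^sub>v u (i - 1)"
proof -
  define v where "v = (As - ths i \<cdot>\<^sub>m 1\<^sub>m (Suc d)) *\<^sub>v u i"
  have v_eq: "v = As *\<^sub>v u i - ths i \<cdot>\<^sub>v u i" unfolding v_def by (rule shift_mat_vec[OF YS.A_carrier u_carrier])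
  have vc: "v \<in> carrier_vec (Suc d)" unfolding v_eq by simp
  have hi: "U.coord m v = 0" if m: "i \<le> m" "m \<le> d" for m
  proof (rule Ucoord_hi[OF vc _ m])
    fix j assume j: "i \<le> j" "j \<le> d"
    hence j': "j < Suc d" by simp
    have "yc j v = ths j * yc j (u i) - ths i * yc j (u i)"
      unfolding v_eq using YS.coord_minus[OF j' As_u_carrier smult_carrier_vec[THEN iffD2, OF u_carrier]]
        YS.coord_smult[OF j' u_carrier] YS.coord_A[OF u_carrier j(2)] by simp
    also have "\<dots> = 0" using yc_u_high[of i j] j by (cases "i = j") auto
    finally show "yc j v = 0" .
  qed
  have lo: "U.coord m v = 0" if m: "m < i - 1" "m \<le> d" for m
  proof (rule Ucoord_lo[OF vc _ m])
    fix j assume j: "j < i - 1" "j \<le> d"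
    hence j': "j < Suc d" by simp
    have "xc j (As *\<^sub>v u i) = (\<Sum>m<Suc d. xc m (u i) * xc j (As *\<^sub>v XA.x m))" by (rule xc_As) (use j in auto)
    also have "\<dots> = 0"
    proof (intro sum.neutral ballI)
      fix m assume m: "m \<in> {..<Suc d}"
      show "xc m (u i) * xc j (As *\<^sub>v XA.x m) = 0"
      proof (cases "m < i")
        case True thus ?thesis using xc_u_low m by simp
      next
        case False
        hence "Suc j < m" using j by presburger
        thus ?thesis using TX0[of j m] j m by simp
      qed
    qed
    finally have "xc j (As *\<^sub>v u i) = 0" .
    moreover have "xc j (u i) = 0" using xc_u_low j by simp
    ultimately show "xc j v = 0"
      unfolding v_eq using XA.coord_minus[OF j' As_u_carrier smult_carrier_vec[THEN iffD2, OF u_carrier]]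
        XA.coord_smult[OF j' u_carrier] by simp
  qed
  have "v = phi i \<cdot>\<^sub>v u (i - 1)"
  proof (rule U.eq_by_coord[OF vc])
    show "phi i \<cdot>\<^sub>v u (i - 1) \<in> carrier_vec (Suc d)" by (rule smult_carrier_vec[THEN iffD2, OF u_carrier])
  next
    fix m assume m: "m < Suc d"
    have cs: "U.coord m (phi i \<cdot>\<^sub>v u (i - 1)) = phi i * U.coord m (u (i - 1))"
      by (rule U.coord_smult[OF m u_carrier])
    have i1: "i - 1 < Suc d" using i by linarith
    show "U.coord m v = U.coord m (phi i \<cdot>\<^sub>v u (i - 1))"
    proof (cases "m = i - 1")
      case True
      have "U.coord m (u (i - 1)) = 1" using U.coord_f[OF m i1] True by simp
      hence "U.coord m (phi i \<cdot>\<^sub>v u (i - 1)) = phi i" using cs by simp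
      also have "phi i = U.coord m v" unfolding phi_def v_def True ..
      finally show ?thesis ..
    next
      case False
      have c0: "U.coord m (u (i - 1)) = 0" using U.coord_f[OF m i1] False by simp
      have "i \<le> m \<or> m < i - 1" using False by linarith
      hence "U.coord m v = 0"
      proof
        assume "i \<le> m" thus ?thesis using hi m by simp
      next
        assume "m < i - 1" thus ?thesis using lo m by simp
      qed
      thus ?thesis using cs c0 by simp
    qed
  qed
  note vphi = this
  have e1: "As *\<^sub>v u i = v + ths i \<cdot>\<^sub>v u i"
    unfolding v_eq by (rule vec_minus_plus[symmetric, OF As_u_carrier smult_carrier_vec[THEN iffD2, OF u_carrier]])
  also have "\<dots> = phi i \<cdot>\<^sub>v u (i - 1) + ths i \<cdot>\<^sub>v u i" by (simp only: vphi)
  also have "\<dots> = ths i \<cdot>\<^sub>v u i + phi i \<cdot>\<^sub>v u (i - 1)"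
    by (rule comm_add_vec) (rule smult_carrier_vec[THEN iffD2, OF u_carrier])+
  finally show ?thesis .
qed

end


context LS begin

lemma u0: "u 0 = y 0" by simp

lemma vec_plus_zero_smult: "a \<in> carrier_vec n \<Longrightarrow> b \<in> carrier_vec n \<Longrightarrow> a + 0 \<cdot>\<^sub>v b = (a :: 'a vec)"
  by (intro eq_vecI) auto
lemma vec_plus_minus: "a \<in> carrier_vec n \<Longrightarrow> b \<in> carrier_vec n \<Longrightarrow> a + b - a = (b :: 'a vec)"
  by (intro eq_vecI) auto

lemma smc: "v \<in> carrier_vec n \<Longrightarrow> (a::'a) \<cdot>\<^sub>v v \<in> carrier_vec n" by simp

lemma Ucoord_As_u: assumes m: "m \<le> d" and j: "j \<le> d"
  shows "U.coord j (As *\<^sub>v u m) = (if j = m then ths m else 0) + (if Suc j = m then phi m else 0)"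
proof -
  have j': "j < Suc d" using j by simp
  show ?thesis
  proof (cases "m = 0")
    case True
    have "As *\<^sub>v u m = ths 0 \<cdot>\<^sub>v u 0" using True YS.evec(3)[of 0] by simp
    hence "U.coord j (As *\<^sub>v u m) = ths 0 * U.coord j (u 0)" using U.coord_smult[OF j' u_carrier, of "ths 0" 0] by (simp del: useq.simps)
    thus ?thesis using True U.coord_f[OF j', of 0] by (simp del: useq.simps)
  next
    case False
    hence m1: "1 \<le> m" "m - 1 < Suc d" "m < Suc d" using m by auto
    have "U.coord j (As *\<^sub>v u m) = U.coord j (ths m \<cdot>\<^sub>v u m) + U.coord j (phi m \<cdot>\<^sub>v u (m - 1))"
      unfolding As_u[OF m1(1) m] by (rule U.coord_add[OF j' smc[OF u_carrier] smc[OF u_carrier]])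
    also have "\<dots> = ths m * U.coord j (u m) + phi m * U.coord j (u (m - 1))"
      using U.coord_smult[OF j' u_carrier] by simp
    also have "\<dots> = (if j = m then ths m else 0) + (if Suc j = m then phi m else 0)"
      using U.coord_f[OF j' m1(3)] U.coord_f[OF j' m1(2)] False by auto
    finally show ?thesis .
  qed
qed

lemma phi_nz: assumes i: "1 \<le> i" "i \<le> d" shows "phi i \<noteq> 0"
proof
  assume z: "phi i = 0"
  have eq: "As *\<^sub>v u i = ths i \<cdot>\<^sub>v u i" using As_u[OF i] z vec_plus_zero_smult[OF smc[OF u_carrier[of i]] u_carrier[of "i - 1"]] by simp
  have j: "i - 1 \<le> d" "i - 1 < Suc d" using i by auto
  have "xc (i - 1) (As *\<^sub>v u i) = (\<Sum>m<Suc d. xc m (u i) * xc (i - 1) (As *\<^sub>v XA.x m))"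
    by (rule xc_As) (use j in auto)
  also have "\<dots> = (\<Sum>m<Suc d. if m = i then xc i (u i) * xc (i - 1) (As *\<^sub>v XA.x i) else 0)"
  proof (rule sum.cong)
    fix m assume m: "m \<in> {..<Suc d}"
    show "xc m (u i) * xc (i - 1) (As *\<^sub>v XA.x m) = (if m = i then xc i (u i) * xc (i - 1) (As *\<^sub>v XA.x i) else 0)"
    proof (cases "m < i")
      case True thus ?thesis using xc_u_low m by simp
    next
      case False
      show ?thesis
      proof (cases "m = i")
        case False2: False
        hence "Suc (i - 1) < m" using False i by presburger
        thus ?thesis using TX0[of "i - 1" m] j m False2 by simp
      qed simp
    qed
  qed simp
  also have "\<dots> = xc i (u i) * xc (i - 1) (As *\<^sub>v XA.x i)" using i by (subst sum.delta) auto
  finally have "xc (i - 1) (As *\<^sub>v u i) = xc i (u i) * xc (i - 1) (As *\<^sub>v XA.x i)" .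
  moreover have "xc i (u i) \<noteq> 0" using xc_u_diag i by simp
  moreover have "xc (i - 1) (As *\<^sub>v XA.x i) \<noteq> 0" using TX2[of "i - 1"] i by simp
  moreover have "xc (i - 1) (As *\<^sub>v u i) = 0"
    unfolding eq using XA.coord_smult[OF j(2) u_carrier] xc_u_low[of "i - 1" i] i by simp
  ultimately show False by simp
qed

lemma split_U_char: assumes i: "i \<le> d"
  shows "split_U d A As th ths i = {v \<in> carrier_vec (Suc d). (\<forall>j\<le>d. i < j \<longrightarrow> yc j v = 0) \<and> (\<forall>j<i. xc j v = 0)}"
proof -
  have "subspace_sum d (prim_idem d As ths) {0..i} = {v \<in> carrier_vec (Suc d). \<forall>j\<le>d. j \<notin> {0..i} \<longrightarrow> yc j v = 0}"
    by (rule YS.subspace_sum_char) (use i in auto)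
  moreover have "subspace_sum d (prim_idem d A th) {i..d} = {v \<in> carrier_vec (Suc d). \<forall>j\<le>d. j \<notin> {i..d} \<longrightarrow> xc j v = 0}"
    by (rule XA.subspace_sum_char) auto
  ultimately show ?thesis unfolding split_U_def using i by auto
qed

lemma split_U_u: assumes i: "i \<le> d" and v: "v \<in> split_U d A As th ths i"
  shows "v = U.coord i v \<cdot>\<^sub>v u i"
proof -
  have vc: "v \<in> carrier_vec (Suc d)" and hy: "\<And>j. j \<le> d \<Longrightarrow> i < j \<Longrightarrow> yc j v = 0"
    and hx: "\<And>j. j < i \<Longrightarrow> xc j v = 0" using v split_U_char[OF i] by auto
  show ?thesis
  proof (rule U.eq_by_coord[OF vc smc[OF u_carrier]])
    fix m assume m: "m < Suc d"
    have c: "U.coord m (U.coord i v \<cdot>\<^sub>v u i) = U.coord i v * U.coord m (u i)"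
      by (rule U.coord_smult[OF m u_carrier])
    show "U.coord m v = U.coord m (U.coord i v \<cdot>\<^sub>v u i)"
    proof (cases "m = i")
      case True thus ?thesis using c U.coord_f[OF m, of i] i by simp
    next
      case False
      have "U.coord m v = 0"
      proof (cases "i < m")
        case True show ?thesis by (rule Ucoord_hi[OF vc, of "Suc i"]) (use hy True m in auto)
      next
        case False2: False
        hence "m < i" using False by simp
        show ?thesis by (rule Ucoord_lo[OF vc, of i]) (use hx \<open>m < i\<close> m in auto)
      qed
      thus ?thesis using c U.coord_f[OF m, of i] i False by simp
    qed
  qed
qed

lemma u_in_split_U: "i \<le> d \<Longrightarrow> u i \<in> split_U d A As th ths i"
  unfolding split_U_char using yc_u_high xc_u_low by auto

lemma M_u: assumes i: "1 \<le> i" "i \<le> d"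
  shows "((A - th (i - 1) \<cdot>\<^sub>m 1\<^sub>m (Suc d)) * (As - ths i \<cdot>\<^sub>m 1\<^sub>m (Suc d))) *\<^sub>v (c \<cdot>\<^sub>v u i) = phi i \<cdot>\<^sub>v (c \<cdot>\<^sub>v u i)"
proof -
  have P: "A - th (i - 1) \<cdot>\<^sub>m 1\<^sub>m (Suc d) \<in> carrier_mat (Suc d) (Suc d)" by simp
  have Q: "As - ths i \<cdot>\<^sub>m 1\<^sub>m (Suc d) \<in> carrier_mat (Suc d) (Suc d)" by simp
  have "(As - ths i \<cdot>\<^sub>m 1\<^sub>m (Suc d)) *\<^sub>v u i = phi i \<cdot>\<^sub>v u (i - 1)"
    using shift_mat_vec[OF YS.A_carrier u_carrier, of "ths i" i] As_u[OF i]
      vec_plus_minus[OF smc[OF u_carrier[of i]] smc[OF u_carrier[of "i - 1"]]] by simp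
  moreover have "(A - th (i - 1) \<cdot>\<^sub>m 1\<^sub>m (Suc d)) *\<^sub>v u (i - 1) = u i"
  proof -
    have "u i = u (Suc (i - 1))" using i by simp
    thus ?thesis by (simp add: dA)
  qed
  moreover have "((A - th (i - 1) \<cdot>\<^sub>m 1\<^sub>m (Suc d)) * (As - ths i \<cdot>\<^sub>m 1\<^sub>m (Suc d))) *\<^sub>v u i
    = (A - th (i - 1) \<cdot>\<^sub>m 1\<^sub>m (Suc d)) *\<^sub>v ((As - ths i \<cdot>\<^sub>m 1\<^sub>m (Suc d)) *\<^sub>v u i)"
    by (rule assoc_mult_mat_vec[OF P Q u_carrier])
  moreover have "(A - th (i - 1) \<cdot>\<^sub>m 1\<^sub>m (Suc d)) *\<^sub>v (phi i \<cdot>\<^sub>v u (i - 1))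
     = phi i \<cdot>\<^sub>v ((A - th (i - 1) \<cdot>\<^sub>m 1\<^sub>m (Suc d)) *\<^sub>v u (i - 1))"
    by (rule mult_mat_vec[OF P u_carrier])
  ultimately have Mu: "((A - th (i - 1) \<cdot>\<^sub>m 1\<^sub>m (Suc d)) * (As - ths i \<cdot>\<^sub>m 1\<^sub>m (Suc d))) *\<^sub>v u i = phi i \<cdot>\<^sub>v u i"
    by simp
  have PQ: "(A - th (i - 1) \<cdot>\<^sub>m 1\<^sub>m (Suc d)) * (As - ths i \<cdot>\<^sub>m 1\<^sub>m (Suc d)) \<in> carrier_mat (Suc d) (Suc d)"
    using P Q by (rule mult_carrier_mat)
  have "((A - th (i - 1) \<cdot>\<^sub>m 1\<^sub>m (Suc d)) * (As - ths i \<cdot>\<^sub>m 1\<^sub>m (Suc d))) *\<^sub>v (c \<cdot>\<^sub>v u i)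
     = c \<cdot>\<^sub>v (((A - th (i - 1) \<cdot>\<^sub>m 1\<^sub>m (Suc d)) * (As - ths i \<cdot>\<^sub>m 1\<^sub>m (Suc d))) *\<^sub>v u i)"
    by (rule mult_mat_vec[OF PQ u_carrier])
  thus ?thesis using Mu by (simp add: smult_smult_assoc mult.commute)
qed

lemma split_val_eq: assumes i: "1 \<le> i" "i \<le> d"
  shows "split_val d A As th ths i = phi i"
  unfolding split_val_def
proof (rule the_equality)
  show "\<forall>v\<in>split_U d A As th ths i. ((A - th (i - 1) \<cdot>\<^sub>m 1\<^sub>m (Suc d)) * (As - ths i \<cdot>\<^sub>m 1\<^sub>m (Suc d))) *\<^sub>v v = phi i \<cdot>\<^sub>v v"
  proof
    fix v assume v: "v \<in> split_U d A As th ths i"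
    have "v = U.coord i v \<cdot>\<^sub>v u i" by (rule split_U_u[OF i(2) v])
    thus "((A - th (i - 1) \<cdot>\<^sub>m 1\<^sub>m (Suc d)) * (As - ths i \<cdot>\<^sub>m 1\<^sub>m (Suc d))) *\<^sub>v v = phi i \<cdot>\<^sub>v v"
      using M_u[OF i, of "U.coord i v"] by metis
  qed
next
  fix c assume c: "\<forall>v\<in>split_U d A As th ths i. ((A - th (i - 1) \<cdot>\<^sub>m 1\<^sub>m (Suc d)) * (As - ths i \<cdot>\<^sub>m 1\<^sub>m (Suc d))) *\<^sub>v v = c \<cdot>\<^sub>v v"
  have "c \<cdot>\<^sub>v u i = phi i \<cdot>\<^sub>v u i"
    using c[rule_format, OF u_in_split_U[OF i(2)]] M_u[OF i, of 1] by simp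
  moreover have "u i \<noteq> 0\<^sub>v (Suc d)" using U.f_nz i by simp
  ultimately show "c = phi i" using smult_vec_cancel u_carrier by blast
qed

end


context LS begin

lemma yc_chain: assumes ik: "i \<le> k" and kd: "k \<le> d"
  shows "yc i (u k) * (\<Prod>h\<in>{i<..k}. ths i - ths h) = Bp i * (\<Prod>h\<in>{i<..k}. phi h)"
  using ik kd
proof (induction k)
  case 0
  hence "i = 0" by simp
  thus ?case using yc_u[of 0] by simp
next
  case (Suc k)
  show ?case
  proof (cases "i = Suc k")
    case True thus ?thesis using yc_u[of i] Suc.prems by simp
  next
    case False
    hence ik: "i \<le> k" and kd: "k \<le> d" and kd1: "Suc k \<le> d" using Suc.prems by auto
    have IH: "yc i (u k) * (\<Prod>h\<in>{i<..k}. ths i - ths h) = Bp i * (\<Prod>h\<in>{i<..k}. phi h)"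
      using Suc.IH[OF ik kd] .
    have i': "i < Suc d" using Suc.prems by simp
    have "yc i (As *\<^sub>v u (Suc k)) = ths i * yc i (u (Suc k))"
      by (rule YS.coord_A[OF u_carrier]) (use Suc.prems in simp)
    moreover have "As *\<^sub>v u (Suc k) = ths (Suc k) \<cdot>\<^sub>v u (Suc k) + phi (Suc k) \<cdot>\<^sub>v u k"
      using As_u[of "Suc k"] kd1 by simp
    moreover have "yc i (ths (Suc k) \<cdot>\<^sub>v u (Suc k) + phi (Suc k) \<cdot>\<^sub>v u k)
       = ths (Suc k) * yc i (u (Suc k)) + phi (Suc k) * yc i (u k)"
      using YS.coord_add[OF i' smc[OF u_carrier] smc[OF u_carrier]] YS.coord_smult[OF i' u_carrier] by (simp del: useq.simps)
    ultimately have rec: "(ths i - ths (Suc k)) * yc i (u (Suc k)) = phi (Suc k) * yc i (u k)"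
      by (simp add: algebra_simps)
    have S: "{i<..Suc k} = insert (Suc k) {i<..k}" using ik by auto
    have "yc i (u (Suc k)) * (\<Prod>h\<in>{i<..Suc k}. ths i - ths h)
      = ((ths i - ths (Suc k)) * yc i (u (Suc k))) * (\<Prod>h\<in>{i<..k}. ths i - ths h)"
      unfolding S by (simp add: algebra_simps)
    also have "\<dots> = phi (Suc k) * (yc i (u k) * (\<Prod>h\<in>{i<..k}. ths i - ths h))" unfolding rec by simp
    also have "\<dots> = Bp i * (\<Prod>h\<in>{i<..Suc k}. phi h)" unfolding IH S by (simp add: algebra_simps)
    finally show ?thesis .
  qed
qed

lemma ud: "u d = xc d (u d) \<cdot>\<^sub>v XA.x d" "xc d (u d) \<noteq> 0"
proof -
  show "u d = xc d (u d) \<cdot>\<^sub>v XA.x d"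
  proof (rule XA.eq_by_coord[OF u_carrier smc[OF XA.x_carrier]])
    fix j assume j: "j < Suc d"
    have "xc j (xc d (u d) \<cdot>\<^sub>v XA.x d) = xc d (u d) * xc j (XA.x d)"
      by (rule XA.coord_smult[OF j XA.x_carrier]) simp
    thus "xc j (u d) = xc j (xc d (u d) \<cdot>\<^sub>v XA.x d)"
      using j xc_u_low[of j d] XA.coord_x[of j d] by (cases "j = d") auto
  qed simp
  show "xc d (u d) \<noteq> 0" using xc_u_diag by simp
qed

lemma y_formula: assumes i: "i \<le> d"
  shows "xc 0 (y i) * (Bp i * tau_star ths i (ths i)) = (\<Prod>h\<in>{1..i}. phi h) * xc 0 (y 0)"
proof -
  define c where "c m = U.coord m (y i)" for m
  have yic: "y i \<in> carrier_vec (Suc d)" using i by simp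
  have sp: "y i = lcv (Suc d) u c {..<Suc d}" unfolding c_def by (rule U.spans[OF yic])
  have hi: "c m = 0" if m: "i < m" "m \<le> d" for m
    unfolding c_def by (rule Ucoord_hi[OF yic, of "Suc i"]) (use m i in \<open>auto simp: YS.coord_x\<close>)
  have cB: "c i * Bp i = 1"
  proof -
    have "1 = yc i (y i)" using YS.coord_x[OF i i] by simp
    also have "\<dots> = yc i (lcv (Suc d) u c {..<Suc d})" by (rule arg_cong[OF sp])
    also have "\<dots> = (\<Sum>m<Suc d. c m * yc i (u m))" by (rule yc_lcv_u[OF i])
    also have "\<dots> = (\<Sum>m<Suc d. if m = i then c i * Bp i else 0)"
    proof (rule sum.cong)
      fix m assume m: "m \<in> {..<Suc d}"
      show "c m * yc i (u m) = (if m = i then c i * Bp i else 0)"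
        using yc_u[of i] yc_u_high[of m i] hi[of m] i m by (cases "m < i"; cases "m = i") auto
    qed simp
    also have "\<dots> = c i * Bp i" using i by (subst sum.delta) auto
    finally show ?thesis by simp
  qed
  have rec: "c m * phi m = (ths i - ths (m - 1)) * c (m - 1)" if m: "1 \<le> m" "m \<le> d" for m
  proof -
    have m1: "m - 1 < Suc d" "m - 1 \<le> d" using m by auto
    have "U.coord (m - 1) (As *\<^sub>v y i) = ths i * c (m - 1)"
      unfolding YS.evec(3)[OF i] c_def by (rule U.coord_smult[OF m1(1) yic])
    moreover have "U.coord (m - 1) (As *\<^sub>v y i) = (\<Sum>m'<Suc d. c m' * U.coord (m - 1) (As *\<^sub>v u m'))"
      unfolding c_def by (rule U.coord_mult[OF YS.A_carrier yic m1(1)])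
    moreover have "(\<Sum>m'<Suc d. c m' * U.coord (m - 1) (As *\<^sub>v u m'))
       = (\<Sum>m'<Suc d. (if m' = m - 1 then c (m - 1) * ths (m - 1) else 0) + (if m' = m then c m * phi m else 0))"
    proof (rule sum.cong)
      fix m' assume m': "m' \<in> {..<Suc d}"
      show "c m' * U.coord (m - 1) (As *\<^sub>v u m') = (if m' = m - 1 then c (m - 1) * ths (m - 1) else 0) + (if m' = m then c m * phi m else 0)"
        using Ucoord_As_u[of m' "m - 1"] m' m1 m by auto
    qed simp
    moreover have "\<dots> = c (m - 1) * ths (m - 1) + c m * phi m"
      using m1 m by (simp add: sum.distrib)
    ultimately show ?thesis by (simp add: algebra_simps)
  qed
  have ind: "c m * (\<Prod>h\<in>{1..m}. phi h) = c 0 * tau_star ths m (ths i)" if "m \<le> d" for m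
    using that
  proof (induction m)
    case 0 thus ?case by (simp add: tau_star_def)
  next
    case (Suc m)
    have S: "{1..Suc m} = insert (Suc m) {1..m}" by auto
    have "c (Suc m) * (\<Prod>h\<in>{1..Suc m}. phi h) = (c (Suc m) * phi (Suc m)) * (\<Prod>h\<in>{1..m}. phi h)"
      unfolding S by (simp add: algebra_simps)
    also have "\<dots> = (ths i - ths m) * (c m * (\<Prod>h\<in>{1..m}. phi h))"
    proof -
      have r: "c (Suc m) * phi (Suc m) = (ths i - ths m) * c m" using rec[of "Suc m"] Suc.prems by simp
      show ?thesis unfolding r by (simp add: algebra_simps)
    qed
    also have "\<dots> = c 0 * tau_star ths (Suc m) (ths i)"
      using Suc by (simp add: tau_star_def algebra_simps)
    finally show ?case .
  qed
  have x0: "xc 0 (y i) = c 0 * xc 0 (y 0)"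
  proof -
    have "xc 0 (y i) = xc 0 (lcv (Suc d) u c {..<Suc d})" by (rule arg_cong[OF sp])
    also have "\<dots> = (\<Sum>m<Suc d. c m * xc 0 (u m))" by (rule xc_lcv_u) simp
    also have "\<dots> = (\<Sum>m<Suc d. if m = 0 then c 0 * xc 0 (y 0) else 0)"
      by (rule sum.cong) (auto simp: xc_u_low)
    also have "\<dots> = c 0 * xc 0 (y 0)" by simp
    finally show ?thesis .
  qed
  have "c i * (\<Prod>h\<in>{1..i}. phi h) = c 0 * tau_star ths i (ths i)" by (rule ind[OF i])
  hence "(c i * Bp i) * (\<Prod>h\<in>{1..i}. phi h) = c 0 * tau_star ths i (ths i) * Bp i"
    by (simp add: algebra_simps)
  hence "(\<Prod>h\<in>{1..i}. phi h) = c 0 * tau_star ths i (ths i) * Bp i" using cB by simp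
  thus ?thesis using x0 by (simp add: algebra_simps)
qed

end


lemma trace_EE:
  assumes P: "MF d B sg" and Q: "MF d C tau" and a: "a \<le> d" and b: "b \<le> d"
  shows "mtrace (prim_idem d C tau a * prim_idem d B sg b)
    = fbasis.coord (Suc d) (\<lambda>j. evec C (tau j)) a (evec B (sg b)) * fbasis.coord (Suc d) (\<lambda>j. evec B (sg j)) b (evec C (tau a))"
proof -
  interpret P: MF d B sg by (rule P)
  interpret Q: MF d C tau by (rule Q)
  let ?w = "Q.coord a (P.x b) \<cdot>\<^sub>v Q.x a"
  have wc: "?w \<in> carrier_vec (Suc d)" using a by simp
  have M: "prim_idem d C tau a * prim_idem d B sg b \<in> carrier_mat (Suc d) (Suc d)"
    by (rule mult_carrier_mat[OF Q.prim_idem_carrier P.prim_idem_carrier])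
  have b': "b < Suc d" using b by simp
  have "mtrace (prim_idem d C tau a * prim_idem d B sg b) = (\<Sum>r<Suc d. P.Fi $$ (b, r) * ?w $ r)"
  proof (rule trace_rank1[OF M _ wc])
    fix v :: "'a vec" assume v: "v \<in> carrier_vec (Suc d)"
    have "(prim_idem d C tau a * prim_idem d B sg b) *\<^sub>v v = prim_idem d C tau a *\<^sub>v (prim_idem d B sg b *\<^sub>v v)"
      by (rule assoc_mult_mat_vec[OF Q.prim_idem_carrier P.prim_idem_carrier v])
    also have "\<dots> = prim_idem d C tau a *\<^sub>v (P.coord b v \<cdot>\<^sub>v P.x b)" using P.E_coord[OF v b] by simp
    also have "\<dots> = P.coord b v \<cdot>\<^sub>v (prim_idem d C tau a *\<^sub>v P.x b)"
      by (rule mult_mat_vec[OF Q.prim_idem_carrier P.x_carrier[OF b]])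
    also have "prim_idem d C tau a *\<^sub>v P.x b = ?w" using Q.E_coord[OF P.x_carrier[OF b] a] .
    also have "P.coord b v = (\<Sum>r<Suc d. P.Fi $$ (b, r) * v $ r)" by (rule P.coord_lin[OF b' v])
    finally show "(prim_idem d C tau a * prim_idem d B sg b) *\<^sub>v v = (\<Sum>r<Suc d. P.Fi $$ (b, r) * v $ r) \<cdot>\<^sub>v ?w" .
  qed
  also have "\<dots> = P.coord b ?w" by (rule P.coord_lin[OF b' wc, symmetric])
  also have "\<dots> = Q.coord a (P.x b) * P.coord b (Q.x a)" by (rule P.coord_smult[OF b' Q.x_carrier[OF a]])
  finally show ?thesis .
qed

lemma eta_reindex: "i \<le> (d::nat) \<Longrightarrow> (\<Prod>h<d - i. f (d - h)) = (\<Prod>h\<in>{i<..d}. (f h :: 'a :: comm_monoid_mult))"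
  by (rule prod.reindex_bij_witness[where i="\<lambda>h. d - h" and j="\<lambda>h. d - h"]) (auto simp: lessThan_iff greaterThanAtMost_iff)

lemma down_eo: assumes "eigen_ordering d A th" shows "eigen_ordering d A (\<lambda>j. th (d - j))"
proof -
  have inj: "inj_on th {..d}" and im: "th ` {..d} = {k. eigenvalue A k}" using assms unfolding eigen_ordering_def by auto
  have "inj_on (\<lambda>j. th (d - j)) {..d}"
    using inj unfolding inj_on_def by (metis atMost_iff diff_diff_cancel diff_le_self)
  moreover have "(\<lambda>j. th (d - j)) ` {..d} = th ` {..d}"
  proof
    show "(\<lambda>j. th (d - j)) ` {..d} \<subseteq> th ` {..d}" by auto
    show "th ` {..d} \<subseteq> (\<lambda>j. th (d - j)) ` {..d}"
    proof
      fix z assume "z \<in> th ` {..d}"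
      then obtain k where k: "k \<le> d" "z = th k" by auto
      hence "z = th (d - (d - k))" by simp
      thus "z \<in> (\<lambda>j. th (d - j)) ` {..d}" by auto
    qed
  qed
  ultimately show ?thesis using im unfolding eigen_ordering_def by simp
qed

lemma prim_idem_down:
  assumes mf: "multiplicity_free d A" and eo: "eigen_ordering d A th" and i: "i \<le> d"
  shows "prim_idem d A (\<lambda>j. th (d - j)) i = prim_idem d A th (d - i)"
proof -
  interpret XA: MF d A th using mf eo by unfold_locales
  interpret XB: MF d A "\<lambda>j. th (d - j)" using mf down_eo[OF eo] by unfold_locales
  show ?thesis
  proof (rule XA.mat_eq_on_basis[OF XB.prim_idem_carrier XA.prim_idem_carrier])
    fix k assume "k < Suc d" hence k: "k \<le> d" by simp
    have "prim_idem d A (\<lambda>j. th (d - j)) i *\<^sub>v XA.x k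
      = (\<Prod>j\<in>{..d} - {i}. (th k - th (d - j)) / (th (d - i) - th (d - j))) \<cdot>\<^sub>v XA.x k"
      by (rule XB.prim_idem_act[OF XA.x_carrier[OF k] XA.evec(3)[OF k] i])
    also have "\<dots> = (if k = d - i then XA.x k else 0\<^sub>v (Suc d))"
    proof (cases "k = d - i")
      case True
      have "(\<Prod>j\<in>{..d} - {i}. (th k - th (d - j)) / (th (d - i) - th (d - j))) = 1"
      proof (rule prod.neutral, rule ballI)
        fix j assume j: "j \<in> {..d} - {i}"
        hence "th (d - i) \<noteq> th (d - j)" using XA.th_inj[of "d - i" "d - j"] i by auto
        thus "(th k - th (d - j)) / (th (d - i) - th (d - j)) = 1" using True by simp
      qed
      thus ?thesis using True k by simp
    next
      case False
      have mem: "d - k \<in> {..d} - {i}" using False k i by auto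
      have p0: "(\<Prod>j\<in>{..d} - {i}. (th k - th (d - j)) / (th (d - i) - th (d - j))) = 0"
        by (rule prod_zero) (use mem k in \<open>auto intro!: bexI[OF _ mem]\<close>)
      have z: "0 \<cdot>\<^sub>v XA.x k = 0\<^sub>v (Suc d)" by (intro eq_vecI) (use k in auto)
      show ?thesis unfolding p0 z using False by simp
    qed
    also have "\<dots> = prim_idem d A th (d - i) *\<^sub>v XA.x k" using XA.prim_idem_evec[of "d - i" k] k by auto
    finally show "prim_idem d A (\<lambda>j. th (d - j)) i *\<^sub>v XA.x k = prim_idem d A th (d - i) *\<^sub>v XA.x k" .
  qed
qed

lemma leonard_down: assumes ls: "leonard_system d A As th ths"
  shows "leonard_system d A As (\<lambda>j. th (d - j)) ths"
proof -
  have mf: "multiplicity_free d A" and eo: "eigen_ordering d A th" using ls unfolding leonard_system_def by auto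
  have pd: "\<And>i. i \<le> d \<Longrightarrow> prim_idem d A (\<lambda>j. th (d - j)) i = prim_idem d A th (d - i)"
    using prim_idem_down[OF mf eo] by blast
  show ?thesis unfolding leonard_system_def
  proof (intro conjI allI impI)
    show "multiplicity_free d A" "multiplicity_free d As" "eigen_ordering d As ths"
      using ls unfolding leonard_system_def by auto
    show "eigen_ordering d A (\<lambda>j. th (d - j))" by (rule down_eo[OF eo])
  next
    fix i j assume i: "i \<le> d" and j: "j \<le> d"
    have L: "(Suc (d - i) < d - j \<or> Suc (d - j) < d - i \<longrightarrow>
           prim_idem d A th (d - i) * As * prim_idem d A th (d - j) = 0\<^sub>m (Suc d) (Suc d)) \<and>
        (Suc (d - i) = d - j \<or> Suc (d - j) = d - i \<longrightarrow>
           prim_idem d A th (d - i) * As * prim_idem d A th (d - j) \<noteq> 0\<^sub>m (Suc d) (Suc d))"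
      using ls unfolding leonard_system_def by auto
    have R: "(Suc i < j \<or> Suc j < i \<longrightarrow> prim_idem d As ths i * A * prim_idem d As ths j = 0\<^sub>m (Suc d) (Suc d)) \<and>
        (Suc i = j \<or> Suc j = i \<longrightarrow> prim_idem d As ths i * A * prim_idem d As ths j \<noteq> 0\<^sub>m (Suc d) (Suc d))"
      using ls i j unfolding leonard_system_def by auto
    have a1: "Suc i < j \<or> Suc j < i \<longleftrightarrow> Suc (d - i) < d - j \<or> Suc (d - j) < d - i" using i j by presburger
    have a2: "Suc i = j \<or> Suc j = i \<longleftrightarrow> Suc (d - i) = d - j \<or> Suc (d - j) = d - i" using i j by presburger
    show "Suc i < j \<or> Suc j < i \<Longrightarrow> prim_idem d A (\<lambda>j. th (d - j)) i * As * prim_idem d A (\<lambda>j. th (d - j)) j = 0\<^sub>m (Suc d) (Suc d)"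
      unfolding pd[OF i] pd[OF j] a1 using L by blast
    show "Suc i = j \<or> Suc j = i \<Longrightarrow> prim_idem d A (\<lambda>j. th (d - j)) i * As * prim_idem d A (\<lambda>j. th (d - j)) j \<noteq> 0\<^sub>m (Suc d) (Suc d)"
      unfolding pd[OF i] pd[OF j] a2 using L by blast
    show "Suc i < j \<or> Suc j < i \<Longrightarrow> prim_idem d As ths i * A * prim_idem d As ths j = 0\<^sub>m (Suc d) (Suc d)"
      using R by auto
    show "Suc i = j \<or> Suc j = i \<Longrightarrow> prim_idem d As ths i * A * prim_idem d As ths j \<noteq> 0\<^sub>m (Suc d) (Suc d)"
      using R by auto
  qed
qed


theorem theorem23p8:
  fixes d :: nat and A As :: "'a::field mat" and th ths :: "nat \<Rightarrow> 'a" and i :: nat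
  assumes "leonard_system d A As th ths"
    and "i \<le> d"
  shows "nu_LS d A As th ths * mtrace (prim_idem d As ths i * prim_idem d A th 0) =
     (\<Prod>h\<in>{1..i}. first_split d A As th ths h) / (\<Prod>h\<in>{1..i}. second_split d A As th ths h) *
     (eta_star d ths d (ths 0) / (tau_star ths i (ths i) * eta_star d ths (d - i) (ths i)))"
proof -
  have ls: "leonard_system d A As th ths" and i: "i \<le> d" using assms by auto
  interpret L1: LS d A As th ths by unfold_locales (rule ls)
  interpret L2: LS d A As "\<lambda>j. th (d - j)" ths by unfold_locales (rule leonard_down[OF ls])
  have mfA: "MF d A th" and mfAs: "MF d As ths" using ls unfolding leonard_system_def MF_def by auto
  let ?x0 = "evec A (th 0)"
  define a where "a = L1.xc 0 (L1.y 0)"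
  define Y where "Y = L1.xc 0 (L1.y i)"
  define bi where "bi = L1.yc i ?x0"
  define b0 where "b0 = L1.yc 0 ?x0"
  define Bi where "Bi = (\<Prod>m<i. L1.yc (Suc m) (A *\<^sub>v L1.y m))"
  define T where "T = tau_star ths i (ths i)"
  define Phi where "Phi = (\<Prod>h\<in>{1..i}. first_split d A As th ths h)"
  define Psi where "Psi = (\<Prod>h\<in>{1..i}. second_split d A As th ths h)"
  define Pi where "Pi = (\<Prod>h\<in>{i<..d}. second_split d A As th ths h)"
  define P0 where "P0 = (\<Prod>h\<in>{0<..d}. second_split d A As th ths h)"
  define Ei where "Ei = (\<Prod>h\<in>{i<..d}. ths i - ths h)"
  define E0 where "E0 = (\<Prod>h\<in>{0<..d}. ths 0 - ths h)"
  define g where "g = L2.xc d (L2.u d)"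
  have tr1: "mtrace (prim_idem d As ths i * prim_idem d A th 0) = bi * Y"
    unfolding bi_def Y_def using trace_EE[OF mfA mfAs i, of 0] by simp
  have tr0: "mtrace (prim_idem d A th 0 * prim_idem d As ths 0) = a * b0"
    unfolding a_def b0_def using trace_EE[OF mfAs mfA, of 0 0] by simp
  have fs: "Phi = (\<Prod>h\<in>{1..i}. L1.phi h)"
    unfolding Phi_def first_split_def using i by (intro prod.cong) (auto simp: L1.split_val_eq)
  have ss: "second_split d A As th ths h = L2.phi h" if "1 \<le> h" "h \<le> d" for h
    unfolding second_split_def using L2.split_val_eq[OF that] .
  have Yf: "Y * (Bi * T) = Phi * a"
    unfolding Y_def Bi_def T_def fs a_def by (rule L1.y_formula[OF i])
  have a_nz: "a \<noteq> 0" unfolding a_def using L1.y0_xc_nz[of 0] by simp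
  have Bi_nz: "Bi \<noteq> 0" unfolding Bi_def using L1.Bp_nz[OF i] .
  have T_nz: "T \<noteq> 0" unfolding T_def tau_star_def using i L1.YS.th_inj by (auto simp: prod_zero_iff)
  have Ei_nz: "Ei \<noteq> 0" unfolding Ei_def using i L1.YS.th_inj by (auto simp: prod_zero_iff)
  have E0_nz: "E0 \<noteq> 0" unfolding E0_def using L1.YS.th_inj by (auto simp: prod_zero_iff)
  have Pi_nz: "Pi \<noteq> 0" unfolding Pi_def using L2.phi_nz ss by (auto simp: prod_zero_iff)
  have Psi_nz: "Psi \<noteq> 0" unfolding Psi_def using L2.phi_nz ss i by (auto simp: prod_zero_iff)
  have P0_eq: "P0 = Psi * Pi"
  proof -
    have "{0<..d} = {1..i} \<union> {i<..d}" using i by auto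
    thus ?thesis unfolding P0_def Psi_def Pi_def by (simp add: prod.union_disjoint ivl_disj_int)
  qed
  have ud: "L2.u d = g \<cdot>\<^sub>v ?x0" unfolding g_def using L2.ud(1) by simp
  have g_nz: "g \<noteq> 0" unfolding g_def using L2.ud(2) .
  have ycu: "L1.yc k (L2.u d) = g * L1.yc k ?x0" if "k \<le> d" for k
    unfolding ud by (rule L1.YS.coord_smult) (use that in simp_all)
  have ci: "g * bi * Ei = Bi * Pi"
  proof -
    have "L1.yc i (L2.u d) * (\<Prod>h\<in>{i<..d}. ths i - ths h) = Bi * (\<Prod>h\<in>{i<..d}. L2.phi h)"
      unfolding Bi_def by (rule L2.yc_chain[OF i order_refl])
    moreover have "(\<Prod>h\<in>{i<..d}. L2.phi h) = Pi" unfolding Pi_def using ss by (intro prod.cong) auto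
    ultimately show ?thesis using ycu[OF i] unfolding bi_def Ei_def by simp
  qed
  have c0: "g * b0 * E0 = P0"
  proof -
    have "L1.yc 0 (L2.u d) * (\<Prod>h\<in>{0<..d}. ths 0 - ths h) = (\<Prod>m<0. L1.yc (Suc m) (A *\<^sub>v L1.y m)) * (\<Prod>h\<in>{0<..d}. L2.phi h)"
      by (rule L2.yc_chain) simp_all
    moreover have "(\<Prod>h\<in>{0<..d}. L2.phi h) = P0" unfolding P0_def using ss by (intro prod.cong) auto
    ultimately show ?thesis using ycu[of 0] unfolding b0_def E0_def by simp
  qed
  have eta1: "eta_star d ths (d - i) (ths i) = Ei"
    unfolding eta_star_def Ei_def by (rule eta_reindex[OF i])
  have eta0: "eta_star d ths d (ths 0) = E0"
    unfolding eta_star_def E0_def using eta_reindex[of 0 d "\<lambda>h. ths 0 - ths h"] by simp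
  have bi_eq: "bi = Bi * Pi / (g * Ei)" using ci g_nz Ei_nz by (simp add: field_simps)
  have b0_eq: "b0 = Psi * Pi / (g * E0)" using c0 g_nz E0_nz P0_eq by (simp add: field_simps)
  have Y_eq: "Y = Phi * a / (Bi * T)" using Yf Bi_nz T_nz by (simp add: field_simps)
  have "nu_LS d A As th ths * mtrace (prim_idem d As ths i * prim_idem d A th 0) = (bi * Y) / (a * b0)"
    unfolding nu_LS_def tr1 tr0 by simp
  also have "\<dots> = Phi / Psi * (E0 / (T * Ei))"
    unfolding bi_eq b0_eq Y_eq using a_nz Bi_nz T_nz Ei_nz E0_nz Pi_nz Psi_nz g_nz by (simp add: field_simps)
  finally show ?thesis unfolding Phi_def Psi_def T_def eta1 eta0 .
qed


end
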